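(* Assume (A1) and (A3). Then for every $\bar\alpha\in\{0,1\}^m$ and every $i\in\{1,\dots,m\}$, the nonstandard derivative $[D^{NS}J(\bar\alpha)]_i$ exists (the defining one-sided limit exists), is unique and finite, and $$[D^{NS}J(\bar\alpha)]_i=\int_0^T\Big(\big(f(x^{\bar\alpha}(t),\bar\alpha+\mathbf 1_i)-f(x^{\bar\alpha}(t),\bar\alpha)\big)^\top\lambda^{\bar\alpha}(t)+r(x^{\bar\alpha}(t),\bar\alpha+\mathbf 1_i)-r(x^{\bar\alpha}(t),\bar\alpha)\Big)\,dt$$ if $\bar\alpha_i=0$, and $$[D^{NS}J(\bar\alpha)]_i=\int_0^T\Big(\big(f(x^{\bar\alpha}(t),\bar\alpha)-f(x^{\bar\alpha}(t),\bar\alpha-\mathbf 1_i)\big)^\top\lambda^{\bar\alpha}(t)+r(x^{\bar\alpha}(t),\bar\alpha)-r(x^{\bar\alpha}(t),\bar\alpha-\mathbf 1_i)\Big)\,dt$$ if $\bar\alpha_i=1$.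
   Context: Fix integers $n,m\ge 1$, a horizon $T>0$, a set $\mathcal X\subseteq\mathbb R^n$ and an initial state $\mathbf x\in\mathcal X$. Let $f:\mathbb R^n\times\mathbb R^m\to\mathbb R^n$, $r:\mathbb R^n\times\mathbb R^m\to\mathbb R$, $q:\mathbb R^n\to\mathbb R$. For $\beta\in\{0,1\}^m$, $x^\beta:[0,T]\to\mathbb R^n$ is the solution of $\dot x(t)=f(x(t),\beta)$, $x(0)=\mathbf x$ (assumed to exist uniquely on $[0,T]$). For a function $z:[0,T]\to\mathbb R^n$ in $L^2$ with a well-defined value $z(T)$ and $\beta\in\mathbb R^m$, set $\mathcal J(z,\beta)=\int_0^T r(z(t),\beta)\,dt+q(z(T))$; the payoff is $J(\beta)=\mathcal J(x^\beta,\beta)$. $\mathbf 1_i$ denotes the $i$-th standard basis vector of $\mathbb R^m$. (A1): for each $\alpha\in\{0,1\}^m$, $f(\cdot,\alpha)$ is twice differentiable with continuous second derivative and globally Lipschitz on $\mathcal X$. (A3): for each $\alpha\in\{0,1\}^m$, $r(\cdot,\alpha)$ and $q$ are continuously differentiable. Adjoint: for $\bar\alpha\in\{0,1\}^m$, $\lambda^{\bar\alpha}:[0,T]\to\mathbb R^n$ solves $-\dot\lambda(t)=\frac{\partial f}{\partial x}(x^{\bar\alpha}(t),\bar\alpha)^\top\lambda(t)+\frac{\partial r}{\partial x}(x^{\bar\alpha}(t),\bar\alpha)^\top$, $\lambda(T)=\frac{\partial q}{\partial x}(x^{\bar\alpha}(T))^\top$ (i.e. $-\dot\lambda=\partial_x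 H^\top$ with Hamiltonian $H(x,\lambda,\alpha)=\lambda^\top f(x,\alpha)+r(x,\alpha)$). $\epsilon$-variational system: for $\bar\alpha,\alpha\in\{0,1\}^m$ and $\epsilon\in[0,1]$, $x^{\epsilon(\bar\alpha,\alpha)}$ is the solution of $\dot x(t)=(1-\epsilon)f(x(t),\bar\alpha)+\epsilon f(x(t),\alpha)$, $x(0)=\mathbf x$, and $\mathcal J^{\epsilon(\bar\alpha,\alpha)}(z):=(1-\epsilon)\mathcal J(z,\bar\alpha)+\epsilon\mathcal J(z,\alpha)$. Nonstandard derivative: $[D^{NS}J(\bar\alpha)]_i:=\lim_{\epsilon\to0^+}\frac1\epsilon\big[\mathcal J^{\epsilon(\bar\alpha,\bar\alpha+\mathbf 1_i)}(x^{\epsilon(\bar\alpha,\bar\alpha+\mathbf 1_i)})-\mathcal J(x^{\bar\alpha},\bar\alpha)\big]$ if $\bar\alpha_i=0$, and $[D^{NS}J(\bar\alpha)]_i:=\lim_{\epsilon\to0^+}\frac1\epsilon\big[\mathcal J(x^{\bar\alpha},\bar\alpha)-\mathcal J^{\epsilon(\bar\alpha,\bar\alpha-\mathbf 1_i)}(x^{\epsilon(\bar\alpha,\bar\alpha-\mathbf 1_i)})\big]$ if $\bar\alpha_i=1$. *)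

theory Defs
  imports "HOL-Analysis.Analysis"
begin

definition binary :: "real^'m \<Rightarrow> bool" where
  "binary \<beta> \<longleftrightarrow> (\<forall>j. \<beta> $ j \<in> {0, 1})"

definition C2_fun :: "('a::euclidean_space \<Rightarrow> 'b::real_normed_vector) \<Rightarrow> bool" where
  "C2_fun g \<longleftrightarrow> (\<exists>Dg D2g.
      (\<forall>x. (g has_derivative blinfun_apply (Dg x)) (at x)) \<and>
      (\<forall>x. (Dg has_derivative blinfun_apply (D2g x)) (at x)) \<and>
      continuous_on UNIV D2g)"

definition C1_fun :: "('a::euclidean_space \<Rightarrow> 'b::real_normed_vector) \<Rightarrow> bool" where
  "C1_fun g \<longleftrightarrow> (\<exists>Dg.
      (\<forall>x. (g has_derivative blinfun_apply (Dg x)) (at x)) \<and> continuous_on UNIV Dg)"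

text \<open>z solves z' = F(z), z(0) = x0 on [0,T]; by convention z is extended by 0
  outside [0,T] so that "the solution" is a well-defined function.\<close>
definition ode_sol :: "real \<Rightarrow> ('v::real_normed_vector \<Rightarrow> 'v) \<Rightarrow> 'v \<Rightarrow> (real \<Rightarrow> 'v) \<Rightarrow> bool" where
  "ode_sol T F x0 z \<longleftrightarrow> z 0 = x0 \<and>
     (\<forall>t\<in>{0..T}. (z has_vector_derivative F (z t)) (at t within {0..T})) \<and>
     (\<forall>t. t \<notin> {0..T} \<longrightarrow> z t = 0)"

definition traj :: "real \<Rightarrow> ('v::real_normed_vector \<Rightarrow> 'v) \<Rightarrow> 'v \<Rightarrow> real \<Rightarrow> 'v" where
  "traj T F x0 = (THE z. ode_sol T F x0 z)"

definition xsol :: "real \<Rightarrow> (real^'n \<Rightarrow> real^'m \<Rightarrow> real^'n) \<Rightarrow> real^'n \<Rightarrow> real^'m \<Rightarrow> real \<Rightarrow> real^'n" where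
  "xsol T f x0 \<beta> = traj T (\<lambda>x. f x \<beta>) x0"

definition xeps :: "real \<Rightarrow> (real^'n \<Rightarrow> real^'m \<Rightarrow> real^'n) \<Rightarrow> real^'n \<Rightarrow> real^'m \<Rightarrow> real^'m \<Rightarrow> real \<Rightarrow> real \<Rightarrow> real^'n" where
  "xeps T f x0 ab a \<epsilon> = traj T (\<lambda>x. (1 - \<epsilon>) *\<^sub>R f x ab + \<epsilon> *\<^sub>R f x a) x0"

definition Jc :: "real \<Rightarrow> (real^'n \<Rightarrow> real^'m \<Rightarrow> real) \<Rightarrow> (real^'n \<Rightarrow> real) \<Rightarrow> (real \<Rightarrow> real^'n) \<Rightarrow> real^'m \<Rightarrow> real" where
  "Jc T r q z \<beta> = integral {0..T} (\<lambda>t. r (z t) \<beta>) + q (z T)"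

definition Jeps :: "real \<Rightarrow> (real^'n \<Rightarrow> real^'m \<Rightarrow> real) \<Rightarrow> (real^'n \<Rightarrow> real) \<Rightarrow> real^'m \<Rightarrow> real^'m \<Rightarrow> real \<Rightarrow> (real \<Rightarrow> real^'n) \<Rightarrow> real" where
  "Jeps T r q ab a \<epsilon> z = (1 - \<epsilon>) * Jc T r q z ab + \<epsilon> * Jc T r q z a"

text \<open>Adjoint (costate) equation along x^abar:
  -lambda' = (df/dx)^T lambda + (dr/dx)^T, lambda(T) = (dq/dx)^T; transposes of the
  Frechet derivatives are expressed with the library's adjoint operator.\<close>
definition costate_sol :: "real \<Rightarrow> (real^'n \<Rightarrow> real^'m \<Rightarrow> real^'n) \<Rightarrow> (real^'n \<Rightarrow> real^'m \<Rightarrow> real) \<Rightarrow> (real^'n \<Rightarrow> real) \<Rightarrow> real^'n \<Rightarrow> real^'m \<Rightarrow> (real \<Rightarrow> real^'n) \<Rightarrow> bool" where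
  "costate_sol T f r q x0 ab lam \<longleftrightarrow>
     lam T = adjoint (frechet_derivative q (at (xsol T f x0 ab T))) 1 \<and>
     (\<forall>t\<in>{0..T}. (lam has_vector_derivative
        - (adjoint (frechet_derivative (\<lambda>y. f y ab) (at (xsol T f x0 ab t))) (lam t)
           + adjoint (frechet_derivative (\<lambda>y. r y ab) (at (xsol T f x0 ab t))) 1))
        (at t within {0..T})) \<and>
     (\<forall>t. t \<notin> {0..T} \<longrightarrow> lam t = 0)"

definition costate :: "real \<Rightarrow> (real^'n \<Rightarrow> real^'m \<Rightarrow> real^'n) \<Rightarrow> (real^'n \<Rightarrow> real^'m \<Rightarrow> real) \<Rightarrow> (real^'n \<Rightarrow> real) \<Rightarrow> real^'n \<Rightarrow> real^'m \<Rightarrow> real \<Rightarrow> real^'n" where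
  "costate T f r q x0 ab = (THE lam. costate_sol T f r q x0 ab lam)"

end

theory Submission
  imports Defs
begin

lemma gronwall:
  fixes \<phi> :: "real \<Rightarrow> real"
  assumes T: "0 \<le> T" and cont: "continuous_on {0..T} \<phi>"
    and c: "0 \<le> c" and L: "0 < L"
    and le: "\<And>t. t\<in>{0..T} \<Longrightarrow> \<phi> t \<le> c + L * integral {0..t} \<phi>"
    and t: "t\<in>{0..T}"
  shows "\<phi> t \<le> c * exp (L*t)"
proof -
  define w where "w u = integral {0..u} \<phi>" for u
  define k where "k u = exp (-L*u) * (w u + c/L)" for u
  have wc: "continuous_on {0..T} w"
    unfolding w_def by (rule indefinite_integral_continuous_1[OF integrable_continuous_real[OF cont]])
  have wd: "(w has_real_derivative \<phi> x) (at x)" if "0 < x" "x < T" for x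
  proof -
    have "(w has_vector_derivative \<phi> x) (at x within {0..T})"
      unfolding w_def using integral_has_vector_derivative[OF cont] that by auto
    moreover have "at x within {0..T} = at x"
      using that by (intro at_within_interior) auto
    ultimately show ?thesis by (simp add: has_real_derivative_iff_has_vector_derivative)
  qed
  have kc: "continuous_on {0..t} k" unfolding k_def
    using t by (intro continuous_intros continuous_on_subset[OF wc]) auto
  have kd: "\<exists>y. (k has_real_derivative y) (at x) \<and> y \<le> 0" if x: "0 < x" "x < t" for x
  proof -
    have "(k has_real_derivative (-L * exp (-L*x) * (w x + c/L) + exp (-L*x) * \<phi> x)) (at x)"
      unfolding k_def using x t
      by (auto intro!: derivative_eq_intros wd)
    moreover have "-L * exp (-L*x) * (w x + c/L) + exp (-L*x) * \<phi> x \<le> 0"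
    proof -
      have "\<phi> x \<le> c + L * w x" using le[of x] x t unfolding w_def by auto
      moreover have "L * (w x + c/L) = L * w x + c" using L by (simp add: field_simps)
      ultimately have "\<phi> x - L * (w x + c/L) \<le> 0" by linarith
      hence "exp (-L*x) * (\<phi> x - L * (w x + c/L)) \<le> 0"
        by (simp add: mult_nonneg_nonpos)
      moreover have "-L * exp (-L*x) * (w x + c/L) + exp (-L*x) * \<phi> x = exp (-L*x) * (\<phi> x - L * (w x + c/L))"
        by (simp only: right_diff_distrib mult.commute mult.left_commute mult_minus_left) simp
      ultimately show ?thesis by linarith
    qed
    ultimately show ?thesis by blast
  qed
  have "k t \<le> k 0"
    using DERIV_nonpos_imp_decreasing_open[of 0 t k] kc kd t by auto
  hence "exp (-L*t) * (w t + c/L) \<le> c/L" by (simp add: k_def w_def)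
  hence "w t + c/L \<le> c/L * exp (L*t)"
    by (simp add: exp_minus field_simps)
  hence "L * (w t + c/L) \<le> L * (c/L * exp (L*t))" using L mult_left_mono[of _ _ L] by (metis less_imp_le)
  moreover have "L * (w t + c/L) = L * w t + c" "L * (c/L * exp (L*t)) = c * exp (L*t)" using L by (auto simp: field_simps)
  ultimately have "L * w t \<le> c * exp (L*t) - c" by linarith
  thus ?thesis using le[OF t] unfolding w_def by linarith
qed

lemma comp_cont:
  fixes F :: "real \<Rightarrow> 'v::real_normed_vector \<Rightarrow> 'v"
  assumes Fc: "\<And>u. continuous_on S (\<lambda>t. F t u)"
    and Fl: "\<And>t u v. t\<in>S \<Longrightarrow> norm (F t u - F t v) \<le> L * norm (u - v)"
    and zc: "continuous_on S z"
  shows "continuous_on S (\<lambda>s. F s (z s))"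
  unfolding continuous_on_def
proof
  fix s0 assume s0: "s0 \<in> S"
  have 1: "((\<lambda>s. F s (z s0)) \<longlongrightarrow> F s0 (z s0)) (at s0 within S)"
    using Fc s0 by (simp add: continuous_on_def)
  have zl: "(z \<longlongrightarrow> z s0) (at s0 within S)" using zc s0 by (simp add: continuous_on_def)
  have "((\<lambda>s. L * norm (z s - z s0)) \<longlongrightarrow> L * norm (z s0 - z s0)) (at s0 within S)"
    by (intro tendsto_intros zl)
  hence g0: "((\<lambda>s. L * norm (z s - z s0)) \<longlongrightarrow> 0) (at s0 within S)" by simp
  have 2: "((\<lambda>s. F s (z s) - F s (z s0)) \<longlongrightarrow> 0) (at s0 within S)"
    by (rule Lim_null_comparison[OF _ g0])
       (auto simp: eventually_at_filter intro!: always_eventually Fl)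
  from tendsto_add[OF 2 1] show "((\<lambda>s. F s (z s)) \<longlongrightarrow> F s0 (z s0)) (at s0 within S)" by simp
qed

lemma has_integral_pow_fact:
  fixes C t :: real
  assumes "0 \<le> t"
  shows "((\<lambda>s. C * s^n / fact n) has_integral (C * t^(Suc n) / fact (Suc n))) {0..t}"
proof -
  have "((\<lambda>s. C * s^(Suc n) / fact (Suc n)) has_real_derivative (C * s^n / fact n)) (at s within {0..t})" for s
  proof -
    have "((\<lambda>s. C * s^(Suc n) / fact (Suc n)) has_real_derivative (C * (real (Suc n) * s^n) / fact (Suc n))) (at s within {0..t})"
    proof -
      have aux: "s^n + real n * s^(n - Suc 0) * s = real (Suc n) * s^n"
        by (cases n) (auto simp: algebra_simps)
      show ?thesis
        by (auto intro!: derivative_eq_intros simp del: of_nat_Suc simp: aux)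
    qed
    moreover have "C * (real (Suc n) * s^n) / fact (Suc n) = C * s^n / fact n"
      by (simp add: fact_Suc del: of_nat_Suc)
    ultimately show ?thesis by simp
  qed
  from fundamental_theorem_of_calculus[OF assms, of "\<lambda>s. C * s^(Suc n) / fact (Suc n)"] this
  show ?thesis by (simp add: has_real_derivative_iff_has_vector_derivative)
qed

primrec picard :: "(real \<Rightarrow> 'v::banach \<Rightarrow> 'v) \<Rightarrow> 'v \<Rightarrow> nat \<Rightarrow> real \<Rightarrow> 'v" where
  "picard F x0 0 = (\<lambda>t. x0)"
| "picard F x0 (Suc k) = (\<lambda>t. x0 + integral {0..t} (\<lambda>s. F s (picard F x0 k s)))"

lemma picard_exist:
  fixes F :: "real \<Rightarrow> 'v::euclidean_space \<Rightarrow> 'v"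
  assumes T: "0 \<le> T" and Fc: "\<And>u. continuous_on {0..T} (\<lambda>t. F t u)"
    and L: "0 < L" and Fl: "\<And>t u v. t\<in>{0..T} \<Longrightarrow> norm (F t u - F t v) \<le> L * norm (u - v)"
  shows "\<exists>z. continuous_on {0..T} z \<and> (\<forall>t\<in>{0..T}. z t = x0 + integral {0..t} (\<lambda>s. F s (z s)))"
proof -
  let ?S = "{0..T}"
  let ?p = "picard F x0"
  have pc: "continuous_on ?S (?p k)" for k
  proof (induction k)
    case 0 show ?case by simp
  next
    case (Suc k)
    have "continuous_on ?S (\<lambda>s. F s (?p k s))" by (rule comp_cont[OF Fc Fl Suc])
    hence "continuous_on ?S (\<lambda>t. integral {0..t} (\<lambda>s. F s (?p k s)))"
      by (intro indefinite_integral_continuous_1 integrable_continuous_real)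
    thus ?case by (simp add: continuous_intros)
  qed
  have Fpc: "continuous_on ?S (\<lambda>s. F s (?p k s))" for k by (rule comp_cont[OF Fc Fl pc])
  have Fpi: "(\<lambda>s. F s (?p k s)) integrable_on {0..t}" if "t \<in> ?S" for k t
    using that by (intro integrable_continuous_real continuous_on_subset[OF Fpc]) auto
  have "compact ((\<lambda>s. F s x0) ` ?S)" by (rule compact_continuous_image[OF Fc compact_Icc])
  then obtain M where M: "M > 0" "\<And>s. s\<in>?S \<Longrightarrow> norm (F s x0) \<le> M"
    using compact_imp_bounded bounded_pos by (metis image_eqI)
  have bound: "norm (?p (Suc k) t - ?p k t) \<le> M * L^k * t^(Suc k) / fact (Suc k)" if "t \<in> ?S" for k t
    using that
  proof (induction k arbitrary: t)
    case 0
    have "norm (integral {0..t} (\<lambda>s. F s x0)) \<le> integral {0..t} (\<lambda>s. M)"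
      using 0 M by (intro integral_norm_bound_integral integrable_continuous_real
          continuous_on_subset[OF Fc]) auto
    thus ?case using 0 by (simp add: mult.commute)
  next
    case (Suc k)
    have "?p (Suc (Suc k)) t - ?p (Suc k) t
        = integral {0..t} (\<lambda>s. F s (?p (Suc k) s) - F s (?p k s))"
      using Suc.prems integral_diff[OF Fpi[of t "Suc k"] Fpi[of t k]] by simp
    also have "norm \<dots> \<le> integral {0..t} (\<lambda>s. (L*M*L^k) * s^(Suc k) / fact (Suc k))"
    proof (rule integral_norm_bound_integral)
      show "(\<lambda>s. F s (?p (Suc k) s) - F s (?p k s)) integrable_on {0..t}"
        using Suc.prems by (intro integrable_diff Fpi)
      have "0 \<le> t" using Suc.prems by auto
      show "(\<lambda>s. (L*M*L^k) * s^(Suc k) / fact (Suc k)) integrable_on {0..t}"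
        using has_integral_integrable[OF has_integral_pow_fact[OF \<open>0 \<le> t\<close>, of "L*M*L^k" "Suc k"]] .
      fix s assume s: "s \<in> {0..t}"
      hence sS: "s \<in> ?S" using Suc.prems by auto
      have "norm (F s (?p (Suc k) s) - F s (?p k s)) \<le> L * norm (?p (Suc k) s - ?p k s)"
        by (rule Fl[OF sS])
      also have "\<dots> \<le> L * (M * L^k * s^(Suc k) / fact (Suc k))"
        using Suc.IH[OF sS] L by (intro mult_left_mono) auto
      finally show "norm (F s (?p (Suc k) s) - F s (?p k s)) \<le> (L*M*L^k) * s^(Suc k) / fact (Suc k)"
        by (simp add: algebra_simps)
    qed
    also have "\<dots> = (L*M*L^k) * t^(Suc (Suc k)) / fact (Suc (Suc k))"
      using Suc.prems by (intro integral_unique has_integral_pow_fact) auto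
    finally show ?case by (simp add: algebra_simps)
  qed
  define b where "b k = M * L^k * T^(Suc k) / fact (Suc k)" for k
  have bT: "norm (?p (Suc k) t - ?p k t) \<le> b k" if "t \<in> ?S" for k t
  proof -
    have "t^(Suc k) \<le> T^(Suc k)" using that by (intro power_mono) auto
    hence "M * L^k * t^(Suc k) / fact (Suc k) \<le> b k"
      unfolding b_def using M L by (intro divide_right_mono mult_left_mono) auto
    with bound[OF that, of k] show ?thesis by linarith
  qed
  have bsum: "summable b"
  proof -
    have "summable (\<lambda>k. inverse (fact (Suc k)) * (L*T)^(Suc k))"
      using summable_exp[of "L*T"] by (subst summable_Suc_iff)
    hence "summable (\<lambda>k. M/L * (inverse (fact (Suc k)) * (L*T)^(Suc k)))"
      by (rule summable_mult)
    moreover have "M/L * (inverse (fact (Suc k)) * (L*T)^(Suc k)) = b k" for k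
    proof -
      have e1: "(L*T)^(Suc k) = L * (L^k * T^(Suc k))" by (simp add: power_mult_distrib)
      have e2: "M/L * (inverse y * (L * X)) = M * X / y" for y X :: real
        using L by (simp add: divide_inverse mult.commute mult.left_commute)
      show ?thesis unfolding b_def e1 e2 by (simp add: mult.assoc)
    qed
    ultimately show ?thesis by simp
  qed
  have b0: "0 \<le> b k" for k unfolding b_def using M L T by auto
  define d where "d k t = ?p (Suc k) t - ?p k t" for k t
  have dsum: "summable (\<lambda>k. d k t)" if "t \<in> ?S" for t
  proof (rule summable_comparison_test'[OF bsum])
    fix k show "norm (d k t) \<le> b k" unfolding d_def by (rule bT[OF that])
  qed
  have dnsum: "summable (\<lambda>k. norm (d (k + j) t))" if "t \<in> ?S" for t j
  proof (rule summable_comparison_test'[OF summable_ignore_initial_segment[OF bsum, of j]])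
    fix k show "norm (norm (d (k + j) t)) \<le> b (k + j)" unfolding d_def norm_ge_zero[THEN abs_of_nonneg, unfolded real_norm_def] using bT[OF that] by simp
  qed
  define z where "z t = x0 + (\<Sum>k. d k t)" for t
  have part: "?p k t = x0 + (\<Sum>j<k. d j t)" for k t
    unfolding d_def sum_lessThan_telescope[of "\<lambda>j. ?p j t"] by simp
  define \<delta> where "\<delta> k = (\<Sum>j. b (j + k))" for k
  have zp: "norm (z t - ?p k t) \<le> \<delta> k" if t: "t \<in> ?S" for k t
  proof -
    have "z t - ?p k t = (\<Sum>j. d (j + k) t)"
      unfolding z_def part using suminf_minus_initial_segment[OF dsum[OF t], of k] by simp
    also have "norm \<dots> \<le> (\<Sum>j. norm (d (j + k) t))" by (rule summable_norm[OF dnsum[OF t]])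
    also have "\<dots> \<le> \<delta> k" unfolding \<delta>_def
    proof (rule suminf_le)
      fix j show "norm (d (j + k) t) \<le> b (j + k)" unfolding d_def by (rule bT[OF t])
    qed (rule dnsum[OF t], rule summable_ignore_initial_segment[OF bsum])
    finally show ?thesis .
  qed
  have \<delta>0: "\<delta> \<longlonglongrightarrow> 0"
  proof -
    have "(\<lambda>k. suminf b - (\<Sum>i<k. b i)) \<longlonglongrightarrow> suminf b - suminf b"
      by (intro tendsto_intros summable_LIMSEQ bsum)
    thus ?thesis unfolding \<delta>_def suminf_minus_initial_segment[OF bsum] by simp
  qed
  have zc: "continuous_on ?S z"
  proof (rule uniform_limit_theorem[where F=sequentially and f="?p"])
    show "\<forall>\<^sub>F n in sequentially. continuous_on ?S (?p n)" using pc by simp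
    show "uniform_limit ?S ?p z sequentially"
    proof (rule uniform_limitI)
      fix e :: real assume "0 < e"
      with \<delta>0 have "\<forall>\<^sub>F k in sequentially. \<delta> k < e" by (rule order_tendstoD(2))
      thus "\<forall>\<^sub>F k in sequentially. \<forall>t\<in>?S. dist (?p k t) (z t) < e"
      proof (rule eventually_mono)
        fix k assume "\<delta> k < e"
        show "\<forall>t\<in>?S. dist (?p k t) (z t) < e"
        proof
          fix t assume t: "t \<in> ?S"
          have "dist (?p k t) (z t) = norm (z t - ?p k t)" by (simp add: dist_norm norm_minus_commute)
          also have "\<dots> \<le> \<delta> k" by (rule zp[OF t])
          finally show "dist (?p k t) (z t) < e" using \<open>\<delta> k < e\<close> by linarith
        qed
      qed
    qed
  qed simp
  have Fzc: "continuous_on ?S (\<lambda>s. F s (z s))" by (rule comp_cont[OF Fc Fl zc])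
  have "z t = x0 + integral {0..t} (\<lambda>s. F s (z s))" if t: "t \<in> ?S" for t
  proof -
    have A: "(\<lambda>k. ?p (Suc k) t) \<longlonglongrightarrow> z t"
    proof -
      have "(\<lambda>k. \<delta> (Suc k)) \<longlonglongrightarrow> 0" using \<delta>0 by (rule LIMSEQ_Suc)
      hence "(\<lambda>k. ?p (Suc k) t - z t) \<longlonglongrightarrow> 0"
      proof (rule Lim_null_comparison[rotated], intro always_eventually allI)
        fix k
        have "norm (?p (Suc k) t - z t) = norm (z t - ?p (Suc k) t)" by (rule norm_minus_commute)
        also have "\<dots> \<le> \<delta> (Suc k)" by (rule zp[OF t])
        finally show "norm (?p (Suc k) t - z t) \<le> \<delta> (Suc k)" .
      qed
      thus ?thesis by (simp add: LIM_zero_iff)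
    qed
    have Fzi: "(\<lambda>s. F s (z s)) integrable_on {0..t}"
      using t by (intro integrable_continuous_real continuous_on_subset[OF Fzc]) auto
    have B: "(\<lambda>k. ?p (Suc k) t) \<longlonglongrightarrow> x0 + integral {0..t} (\<lambda>s. F s (z s))"
    proof -
      have "(\<lambda>k. L * \<delta> k * t) \<longlonglongrightarrow> L * 0 * t" by (intro tendsto_intros \<delta>0)
      hence "(\<lambda>k. L * \<delta> k * t) \<longlonglongrightarrow> 0" by simp
      hence "(\<lambda>k. ?p (Suc k) t - (x0 + integral {0..t} (\<lambda>s. F s (z s)))) \<longlonglongrightarrow> 0"
      proof (rule Lim_null_comparison[rotated], intro always_eventually allI)
        fix k
        have "?p (Suc k) t - (x0 + integral {0..t} (\<lambda>s. F s (z s)))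
            = integral {0..t} (\<lambda>s. F s (?p k s) - F s (z s))"
          using integral_diff[OF Fpi[OF t] Fzi] by simp
        also have "norm \<dots> \<le> integral {0..t} (\<lambda>s. L * \<delta> k)"
        proof (rule integral_norm_bound_integral)
          show "(\<lambda>s. F s (?p k s) - F s (z s)) integrable_on {0..t}"
            by (intro integrable_diff Fpi[OF t] Fzi)
          fix s assume "s \<in> {0..t}"
          hence sS: "s \<in> ?S" using t by auto
          have "norm (F s (?p k s) - F s (z s)) \<le> L * norm (?p k s - z s)" by (rule Fl[OF sS])
          also have "\<dots> = L * norm (z s - ?p k s)" by (simp only: norm_minus_commute)
          also have "\<dots> \<le> L * \<delta> k" using zp[OF sS, of k] L
            by (intro mult_left_mono) auto
          finally show "norm (F s (?p k s) - F s (z s)) \<le> L * \<delta> k" .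
        qed auto
        also have "\<dots> = L * \<delta> k * t" using t by simp
        finally show "norm (?p (Suc k) t - (x0 + integral {0..t} (\<lambda>s. F s (z s)))) \<le> L * \<delta> k * t" .
      qed
      thus ?thesis unfolding LIM_zero_iff .  
    qed
    from LIMSEQ_unique[OF A B] show ?thesis .
  qed
  with zc show ?thesis by blast
qed

lemma C2_C1: "C2_fun g \<Longrightarrow> C1_fun g"
  unfolding C2_fun_def C1_fun_def
  by (metis continuous_at_imp_continuous_on has_derivative_continuous)

lemma C1_lip:
  fixes g :: "'a::euclidean_space \<Rightarrow> 'b::real_normed_vector"
  assumes "C1_fun g"
  shows "\<exists>L>0. \<forall>x\<in>cball 0 R. \<forall>y\<in>cball 0 R. norm (g x - g y) \<le> L * norm (x - y)"
proof -
  obtain Dg where d: "\<And>x. (g has_derivative blinfun_apply (Dg x)) (at x)" and c: "continuous_on UNIV Dg"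
    using assms unfolding C1_fun_def by blast
  have "compact (Dg ` cball 0 R)"
    by (rule compact_continuous_image[OF continuous_on_subset[OF c] compact_cball]) auto
  then obtain B where B: "B>0" "\<And>y. y\<in>Dg ` cball 0 R \<Longrightarrow> norm y \<le> B"
    using compact_imp_bounded bounded_pos by metis
  have "norm (g x - g y) \<le> B * norm (x - y)" if "x\<in>cball 0 R" "y\<in>cball 0 R" for x y
  proof (rule differentiable_bound[OF convex_cball _ _ that])
    show "\<And>x. x \<in> cball 0 R \<Longrightarrow> (g has_derivative blinfun_apply (Dg x)) (at x within cball 0 R)"
      by (rule has_derivative_at_withinI[OF d])
    show "\<And>x. x \<in> cball 0 R \<Longrightarrow> onorm (blinfun_apply (Dg x)) \<le> B"
      using B(2) by (simp add: norm_blinfun.rep_eq[symmetric])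
  qed
  thus ?thesis using B(1) by blast
qed

lemma C1_rem:
  fixes g :: "'a::euclidean_space \<Rightarrow> 'b::real_normed_vector"
  assumes d: "\<And>x. (g has_derivative blinfun_apply (Dg x)) (at x)"
    and c: "continuous_on UNIV Dg" and eta: "0 < \<eta>"
  shows "\<exists>\<rho>>0. \<forall>x\<in>cball 0 R. \<forall>y. norm (y - x) \<le> \<rho> \<longrightarrow>
           norm (g y - g x - blinfun_apply (Dg x) (y - x)) \<le> \<eta> * norm (y - x)"
proof -
  have "uniformly_continuous_on (cball 0 (R+1)) Dg"
    by (rule compact_uniformly_continuous[OF continuous_on_subset[OF c] compact_cball]) auto
  then obtain \<delta> where \<delta>: "\<delta>>0"
    "\<And>u x. u\<in>cball 0 (R+1) \<Longrightarrow> x\<in>cball 0 (R+1) \<Longrightarrow> dist u x < \<delta> \<Longrightarrow> dist (Dg u) (Dg x) < \<eta>"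
    unfolding uniformly_continuous_on_def using eta by metis
  define \<rho> where "\<rho> = min 1 (\<delta>/2)"
  have \<rho>: "\<rho> > 0" "\<rho> \<le> 1" "\<rho> < \<delta>" using \<delta> by (auto simp: \<rho>_def)
  have "norm (g y - g x - blinfun_apply (Dg x) (y - x)) \<le> \<eta> * norm (y - x)"
    if x: "x\<in>cball 0 R" and y: "norm (y - x) \<le> \<rho>" for x y
  proof -
    have "norm (g y - g x - blinfun_apply (Dg x) (y - x)) \<le> norm (y - x) * \<eta>"
    proof (rule differentiable_bound_linearization[where S="cball x \<rho>"])
      fix t :: real assume t: "t \<in> {0..1}"
      have "dist x (x + t *\<^sub>R (y - x)) = t * norm (y - x)" using t by (simp add: dist_norm)
      also have "\<dots> \<le> 1 * \<rho>" using t y by (intro mult_mono) auto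
      finally show "x + t *\<^sub>R (y - x) \<in> cball x \<rho>" by simp
    next
      fix u show "(g has_derivative blinfun_apply (Dg u)) (at u within cball x \<rho>)"
        by (rule has_derivative_at_withinI[OF d])
    next
      fix u assume u: "u \<in> cball x \<rho>"
      have ux: "u \<in> cball 0 (R+1)" "x \<in> cball 0 (R+1)" "dist u x < \<delta>"
        using u x \<rho> norm_triangle_ineq[of x "u - x"]
        by (auto simp: dist_norm norm_minus_commute)
      have "onorm (blinfun_apply (Dg u) - blinfun_apply (Dg x)) = dist (Dg u) (Dg x)"
      proof -
        have "blinfun_apply (Dg u - Dg x) = blinfun_apply (Dg u) - blinfun_apply (Dg x)"
          by (simp add: fun_eq_iff blinfun.diff_left)
        thus ?thesis by (simp add: dist_norm norm_blinfun.rep_eq)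
      qed
      also have "\<dots> < \<eta>" by (rule \<delta>(2)[OF ux])
      finally show "onorm (blinfun_apply (Dg u) - blinfun_apply (Dg x)) \<le> \<eta>" by simp
    qed (use \<rho> in auto)
    thus ?thesis by (simp add: mult.commute)
  qed
  with \<rho> show ?thesis by blast
qed

lemma int_eq_deriv:
  fixes h :: "real \<Rightarrow> 'v::banach"
  assumes hc: "continuous_on {0..T} h" and e: "\<And>t. t\<in>{0..T} \<Longrightarrow> z t = x0 + integral {0..t} h"
    and t: "t\<in>{0..T}"
  shows "(z has_vector_derivative h t) (at t within {0..T})"
proof -
  have "((\<lambda>u. x0 + integral {0..u} h) has_vector_derivative (0 + h t)) (at t within {0..T})"
    by (rule has_vector_derivative_add[OF has_vector_derivative_const integral_has_vector_derivative[OF hc t]])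
  thus ?thesis using has_vector_derivative_transform[OF t e] by simp
qed

lemma deriv_int_eq:
  fixes h :: "real \<Rightarrow> 'v::banach"
  assumes d: "\<And>t. t\<in>{0..T} \<Longrightarrow> (z has_vector_derivative h t) (at t within {0..T})"
    and t: "t\<in>{0..T}"
  shows "(h has_integral (z t - z 0)) {0..t}"
proof (rule fundamental_theorem_of_calculus)
  show "0 \<le> t" using t by auto
  fix s assume "s \<in> {0..t}"
  hence "s \<in> {0..T}" using t by auto
  from has_vector_derivative_within_subset[OF d[OF this]] t
  show "(z has_vector_derivative h s) (at s within {0..t})" by auto
qed

lemma deriv_cont:
  assumes d: "\<And>t. t\<in>S \<Longrightarrow> (z has_vector_derivative h t) (at t within S)"
  shows "continuous_on S z"
  using d has_vector_derivative_continuous continuous_on_eq_continuous_within by blast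

lemma diff_bound:
  fixes z1 z2 h1 h2 :: "real \<Rightarrow> 'v::euclidean_space"
  assumes T: "0 \<le> T" and z1c: "continuous_on {0..T} z1" and z2c: "continuous_on {0..T} z2"
    and h1: "\<And>t. t\<in>{0..T} \<Longrightarrow> (h1 has_integral (z1 t - x0)) {0..t}"
    and h2: "\<And>t. t\<in>{0..T} \<Longrightarrow> (h2 has_integral (z2 t - x0)) {0..t}"
    and L: "0 < L" and c: "0 \<le> c"
    and hb: "\<And>s. s\<in>{0..T} \<Longrightarrow> norm (h1 s - h2 s) \<le> c + L * norm (z1 s - z2 s)"
    and t: "t\<in>{0..T}"
  shows "norm (z1 t - z2 t) \<le> c * T * exp (L * t)"
proof -
  define \<phi> where "\<phi> s = norm (z1 s - z2 s)" for s
  have \<phi>c: "continuous_on {0..T} \<phi>" unfolding \<phi>_def by (intro continuous_intros z1c z2c)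
  have "\<phi> u \<le> c * T + L * integral {0..u} \<phi>" if u: "u \<in> {0..T}" for u
  proof -
    have \<phi>i: "\<phi> integrable_on {0..u}"
      using u by (intro integrable_continuous_real continuous_on_subset[OF \<phi>c]) auto
    have "((\<lambda>s. h1 s - h2 s) has_integral (z1 u - z2 u)) {0..u}"
      using has_integral_diff[OF h1[OF u] h2[OF u]] by simp
    hence "\<phi> u = norm (integral {0..u} (\<lambda>s. h1 s - h2 s))"
      unfolding \<phi>_def by (simp add: integral_unique)
    also have "\<dots> \<le> integral {0..u} (\<lambda>s. c + L * \<phi> s)"
    proof (rule integral_norm_bound_integral)
      show "(\<lambda>s. h1 s - h2 s) integrable_on {0..u}"
        using has_integral_diff[OF h1[OF u] h2[OF u]] by blast
      show "(\<lambda>s. c + L * \<phi> s) integrable_on {0..u}"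
        using u by (intro integrable_continuous_real continuous_intros continuous_on_subset[OF \<phi>c]) auto
      fix s assume "s \<in> {0..u}"
      hence "s \<in> {0..T}" using u by auto
      thus "norm (h1 s - h2 s) \<le> c + L * \<phi> s" unfolding \<phi>_def by (rule hb)
    qed
    also have "\<dots> = c * u + L * integral {0..u} \<phi>"
    proof -
      have "((\<lambda>s. c) has_integral u * c) {0..u}" using has_integral_const_real[of c 0 u] u by simp
      have "((\<lambda>s. c + L *\<^sub>R \<phi> s) has_integral (u * c + L *\<^sub>R integral {0..u} \<phi>)) {0..u}"
        by (rule has_integral_add[OF \<open>((\<lambda>s. c) has_integral u * c) {0..u}\<close> has_integral_cmul[OF integrable_integral[OF \<phi>i]]])
      thus ?thesis using u by (simp add: integral_unique)
    qed
    also have "\<dots> \<le> c * T + L * integral {0..u} \<phi>"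
      using u c by (auto intro: mult_left_mono)
    finally show ?thesis .
  qed
  from gronwall[OF T \<phi>c _ L this t] c T show ?thesis unfolding \<phi>_def by simp
qed

lemma C1_cont: "C1_fun g \<Longrightarrow> continuous_on UNIV g"
  unfolding C1_fun_def
  by (metis continuous_at_imp_continuous_on has_derivative_continuous)

lemma cont_bound:
  fixes z :: "real \<Rightarrow> 'v::real_normed_vector"
  assumes "continuous_on {0..T} z"
  shows "\<exists>R>0. \<forall>t\<in>{0..T}. norm (z t) \<le> R"
proof -
  have "compact (z ` {0..T})" by (rule compact_continuous_image[OF assms compact_Icc])
  then show ?thesis using compact_imp_bounded bounded_pos by (metis image_eqI)
qed

lemma ode_sol_facts:
  fixes z :: "real \<Rightarrow> 'v::banach"
  assumes "ode_sol T G x0 z"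
  shows "z 0 = x0" "\<And>t. t\<in>{0..T} \<Longrightarrow> (z has_vector_derivative G (z t)) (at t within {0..T})"
    "\<And>t. t \<notin> {0..T} \<Longrightarrow> z t = 0" "continuous_on {0..T} z"
    "\<And>t. t\<in>{0..T} \<Longrightarrow> ((\<lambda>s. G (z s)) has_integral (z t - x0)) {0..t}"
proof -
  show z0: "z 0 = x0" and d: "\<And>t. t\<in>{0..T} \<Longrightarrow> (z has_vector_derivative G (z t)) (at t within {0..T})"
    and "\<And>t. t \<notin> {0..T} \<Longrightarrow> z t = 0"
    using assms unfolding ode_sol_def by auto
  show "continuous_on {0..T} z" by (rule deriv_cont[OF d])
  fix t assume "t\<in>{0..T}"
  from deriv_int_eq[where h="\<lambda>s. G (z s)", OF d this] z0 show "((\<lambda>s. G (z s)) has_integral (z t - x0)) {0..t}" by simp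
qed

lemma ode_unique:
  fixes G :: "'v::euclidean_space \<Rightarrow> 'v"
  assumes T: "0 \<le> T" and s1: "ode_sol T G x0 z1" and s2: "ode_sol T G x0 z2"
    and Gl: "\<And>R. \<exists>L>0. \<forall>u\<in>cball 0 R. \<forall>v\<in>cball 0 R. norm (G u - G v) \<le> L * norm (u - v)"
  shows "z1 = z2"
proof
  fix t
  note f1 = ode_sol_facts[OF s1] and f2 = ode_sol_facts[OF s2]
  obtain R1 where R1: "\<And>t. t\<in>{0..T} \<Longrightarrow> norm (z1 t) \<le> R1" using cont_bound[OF f1(4)] by blast
  obtain R2 where R2: "\<And>t. t\<in>{0..T} \<Longrightarrow> norm (z2 t) \<le> R2" using cont_bound[OF f2(4)] by blast
  obtain L where L: "L > 0" "\<forall>u\<in>cball 0 (max R1 R2). \<forall>v\<in>cball 0 (max R1 R2). norm (G u - G v) \<le> L * norm (u - v)"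
    using Gl by blast
  show "z1 t = z2 t"
  proof (cases "t \<in> {0..T}")
    case True
    have "norm (z1 t - z2 t) \<le> 0 * T * exp (L * t)"
    proof (rule diff_bound[OF T f1(4) f2(4) f1(5) f2(5) L(1) order_refl _ True])
      fix s assume s: "s \<in> {0..T}"
      have "z1 s \<in> cball 0 (max R1 R2)" "z2 s \<in> cball 0 (max R1 R2)" using R1[OF s] R2[OF s] by auto
      thus "norm (G (z1 s) - G (z2 s)) \<le> 0 + L * norm (z1 s - z2 s)" using L(2) by auto
    qed
    thus ?thesis by simp
  next
    case False thus ?thesis using f1(3) f2(3) by simp
  qed
qed

lemma C1_loclip:
  fixes g :: "'a::euclidean_space \<Rightarrow> 'b::real_normed_vector"
  assumes "C1_fun g0" "C1_fun g1" "0 \<le> e" "e \<le> 1"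
  shows "\<exists>L>0. \<forall>u\<in>cball 0 R. \<forall>v\<in>cball 0 R.
     norm (((1-e) *\<^sub>R g0 u + e *\<^sub>R g1 u) - ((1-e) *\<^sub>R g0 v + e *\<^sub>R g1 v)) \<le> L * norm (u - v)"
proof -
  obtain L0 where L0: "L0>0" "\<forall>x\<in>cball 0 R. \<forall>y\<in>cball 0 R. norm (g0 x - g0 y) \<le> L0 * norm (x - y)"
    using C1_lip[OF assms(1)] by blast
  obtain L1 where L1: "L1>0" "\<forall>x\<in>cball 0 R. \<forall>y\<in>cball 0 R. norm (g1 x - g1 y) \<le> L1 * norm (x - y)"
    using C1_lip[OF assms(2)] by blast
  have "norm (((1-e) *\<^sub>R g0 u + e *\<^sub>R g1 u) - ((1-e) *\<^sub>R g0 v + e *\<^sub>R g1 v)) \<le> (L0 + L1) * norm (u - v)"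
    if "u\<in>cball 0 R" "v\<in>cball 0 R" for u v
  proof -
    have "((1-e) *\<^sub>R g0 u + e *\<^sub>R g1 u) - ((1-e) *\<^sub>R g0 v + e *\<^sub>R g1 v)
        = (1-e) *\<^sub>R (g0 u - g0 v) + e *\<^sub>R (g1 u - g1 v)" by (simp add: algebra_simps)
    also have "norm \<dots> \<le> (1-e) * norm (g0 u - g0 v) + e * norm (g1 u - g1 v)"
      using assms(3,4) by (metis (no_types, lifting) abs_of_nonneg diff_ge_0_iff_ge norm_scaleR norm_triangle_ineq)
    also have "\<dots> \<le> 1 * (L0 * norm (u - v)) + 1 * (L1 * norm (u - v))"
      using assms(3,4) L0 L1 that by (intro add_mono mult_mono) auto
    finally show ?thesis by (simp add: algebra_simps)
  qed
  thus ?thesis using L0 L1 by (intro exI[of _ "L0+L1"]) auto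
qed

lemma norm_comb_le:
  fixes a b :: "'v::real_normed_vector"
  shows "0 \<le> e \<Longrightarrow> e \<le> 1 \<Longrightarrow> norm ((1-e) *\<^sub>R a + e *\<^sub>R b) \<le> (1-e) * norm a + e * norm b"
  by (rule order_trans[OF norm_triangle_ineq]) simp

lemma le_mult_trans: "(a::real) \<le> L * b \<Longrightarrow> b \<le> c \<Longrightarrow> 0 \<le> L \<Longrightarrow> a \<le> L * c"
  by (erule order_trans) (rule mult_left_mono)

lemma perturb_exist:
  fixes G0 G1 :: "'v::euclidean_space \<Rightarrow> 'v"
  assumes T: "0 \<le> T" and sx: "ode_sol T G0 x0 x"
    and C0: "C1_fun G0" and C1: "C1_fun G1"
  shows "\<exists>C>0. \<exists>e0>0. \<forall>\<epsilon>. 0 < \<epsilon> \<and> \<epsilon> < e0 \<longrightarrow>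
     (\<exists>y. ode_sol T (\<lambda>u. (1-\<epsilon>) *\<^sub>R G0 u + \<epsilon> *\<^sub>R G1 u) x0 y \<and>
          (\<forall>t\<in>{0..T}. norm (y t - x t) \<le> C * \<epsilon>))"
proof -
  let ?S = "{0..T}"
  note fx = ode_sol_facts[OF sx]
  obtain R0 where R0: "R0 > 0" "\<And>t. t\<in>?S \<Longrightarrow> norm (x t) \<le> R0" using cont_bound[OF fx(4)] by blast
  define K where "K = cball (0::'v) (R0+1)"
  have K: "convex K" "closed K" "K \<noteq> {}" using R0 by (auto simp: K_def)
  have xK: "x t \<in> K" if "t \<in> ?S" for t using R0(2)[OF that] by (simp add: K_def)
  obtain L0 where L0: "L0>0" "\<And>u v. u\<in>K \<Longrightarrow> v\<in>K \<Longrightarrow> norm (G0 u - G0 v) \<le> L0 * norm (u - v)"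
    using C1_lip[OF C0, of "R0+1"] unfolding K_def by blast
  obtain L1 where L1: "L1>0" "\<And>u v. u\<in>K \<Longrightarrow> v\<in>K \<Longrightarrow> norm (G1 u - G1 v) \<le> L1 * norm (u - v)"
    using C1_lip[OF C1, of "R0+1"] unfolding K_def by blast
  have "compact ((\<lambda>u. G1 u - G0 u) ` K)"
    unfolding K_def
    by (intro compact_continuous_image continuous_on_subset[OF continuous_on_diff[OF C1_cont[OF C1] C1_cont[OF C0]]]) auto
  then obtain M where M0: "M > 0" "\<forall>w\<in>(\<lambda>u. G1 u - G0 u) ` K. norm w \<le> M"
    using compact_imp_bounded bounded_pos by blast
  hence M: "M > 0" "\<And>u. u\<in>K \<Longrightarrow> norm (G1 u - G0 u) \<le> M" by auto
  define C where "C = M * T * exp (L0 * T) + 1"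
  have "0 \<le> M * T * exp (L0 * T)" using M T by simp
  hence Cpos: "C > 0" unfolding C_def by linarith
  define e0 where "e0 = min 1 (1/C)"
  have "\<exists>y. ode_sol T (\<lambda>u. (1-\<epsilon>) *\<^sub>R G0 u + \<epsilon> *\<^sub>R G1 u) x0 y \<and> (\<forall>t\<in>?S. norm (y t - x t) \<le> C * \<epsilon>)"
    if e: "0 < \<epsilon>" "\<epsilon> < e0" for \<epsilon>
  proof -
    have e1: "\<epsilon> < 1" "C * \<epsilon> < 1" using e Cpos by (auto simp: e0_def field_simps)
    define \<pi> where "\<pi> = closest_point K"
    have \<pi>K: "\<pi> u \<in> K" for u unfolding \<pi>_def by (rule closest_point_in_set[OF K(2,3)])
    have \<pi>l: "norm (\<pi> u - \<pi> v) \<le> norm (u - v)" for u v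
      using closest_point_lipschitz[OF K, of u v] by (simp add: \<pi>_def dist_norm)
    have \<pi>s: "\<pi> u = u" if "u \<in> K" for u unfolding \<pi>_def by (rule closest_point_self[OF that])
    define F where "F t u = (1-\<epsilon>) *\<^sub>R G0 (\<pi> u) + \<epsilon> *\<^sub>R G1 (\<pi> u)" for t :: real and u
    have Fl: "norm (F t u - F t v) \<le> (L0 + L1) * norm (u - v)" for t u v
    proof -
      have "F t u - F t v = (1-\<epsilon>) *\<^sub>R (G0 (\<pi> u) - G0 (\<pi> v)) + \<epsilon> *\<^sub>R (G1 (\<pi> u) - G1 (\<pi> v))"
        by (simp add: F_def algebra_simps)
      also have "norm \<dots> \<le> (1-\<epsilon>) * norm (G0 (\<pi> u) - G0 (\<pi> v)) + \<epsilon> * norm (G1 (\<pi> u) - G1 (\<pi> v))"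
        using e e1 by (intro norm_comb_le) auto
      also have "\<dots> \<le> 1 * (L0 * norm (u - v)) + 1 * (L1 * norm (u - v))"
      proof (intro add_mono mult_mono)
        show "norm (G0 (\<pi> u) - G0 (\<pi> v)) \<le> L0 * norm (u - v)"
          using L0(1) by (intro le_mult_trans[OF L0(2)[OF \<pi>K \<pi>K] \<pi>l]) auto
        show "norm (G1 (\<pi> u) - G1 (\<pi> v)) \<le> L1 * norm (u - v)"
          using L1(1) by (intro le_mult_trans[OF L1(2)[OF \<pi>K \<pi>K] \<pi>l]) auto
      qed (use e e1 L0 L1 in auto)
      finally show ?thesis by (simp add: algebra_simps)
    qed
    have Fc: "continuous_on ?S (\<lambda>t. F t u)" for u by (simp add: F_def)
    obtain z where zc: "continuous_on ?S z" and ze: "\<And>t. t\<in>?S \<Longrightarrow> z t = x0 + integral {0..t} (\<lambda>s. F s (z s))"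
      using picard_exist[OF T Fc _ Fl, of x0] L0 L1 by auto
    have Fzc: "continuous_on ?S (\<lambda>s. F s (z s))" by (rule comp_cont[OF Fc Fl zc])
    have hz: "((\<lambda>s. F s (z s)) has_integral (z t - x0)) {0..t}" if t: "t\<in>?S" for t
    proof -
      have "(\<lambda>s. F s (z s)) integrable_on {0..t}"
        using t by (intro integrable_continuous_real continuous_on_subset[OF Fzc]) auto
      thus ?thesis using ze[OF t] by (simp add: has_integral_integral)
    qed
    have bnd: "norm (z t - x t) \<le> (\<epsilon> * M) * T * exp (L0 * t)" if t: "t\<in>?S" for t
    proof (rule diff_bound[OF T zc fx(4) hz fx(5) L0(1) _ _ t])
      show "0 \<le> \<epsilon> * M" using e M by auto
      fix s assume s: "s \<in> ?S"
      have "F s (z s) - G0 (x s) = (G0 (\<pi> (z s)) - G0 (\<pi> (x s))) + \<epsilon> *\<^sub>R (G1 (\<pi> (z s)) - G0 (\<pi> (z s)))"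
        using \<pi>s[OF xK[OF s]] by (simp add: F_def algebra_simps)
      also have "norm \<dots> \<le> L0 * norm (z s - x s) + \<epsilon> * M"
      proof (rule norm_triangle_le[OF add_mono])
        show "norm (G0 (\<pi> (z s)) - G0 (\<pi> (x s))) \<le> L0 * norm (z s - x s)"
          using L0(1) by (intro le_mult_trans[OF L0(2)[OF \<pi>K \<pi>K] \<pi>l]) auto
        show "norm (\<epsilon> *\<^sub>R (G1 (\<pi> (z s)) - G0 (\<pi> (z s)))) \<le> \<epsilon> * M"
          using M(2)[OF \<pi>K] e by (simp add: mult_left_mono)
      qed
      finally show "norm (F s (z s) - G0 (x s)) \<le> \<epsilon> * M + L0 * norm (z s - x s)" by simp
    qed
    have bnd2: "norm (z t - x t) \<le> C * \<epsilon>" if t: "t\<in>?S" for t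
    proof -
      have "exp (L0 * t) \<le> exp (L0 * T)" using t L0 by (auto intro: mult_left_mono)
      hence "(\<epsilon> * M) * T * exp (L0 * t) \<le> (\<epsilon> * M) * T * exp (L0 * T)"
        using e M T by (intro mult_left_mono) auto
      also have "\<dots> \<le> C * \<epsilon>" unfolding C_def using e by (simp add: algebra_simps)
      finally show ?thesis using bnd[OF t] by linarith
    qed
    have zK: "z t \<in> K" if t: "t\<in>?S" for t
    proof -
      have "norm (z t) \<le> norm (x t) + norm (z t - x t)" using norm_triangle_ineq[of "x t" "z t - x t"] by simp
      also have "\<dots> \<le> R0 + 1" using R0(2)[OF t] bnd2[OF t] e1 by linarith
      finally show ?thesis by (simp add: K_def)
    qed
    define y where "y t = (if t \<in> ?S then z t else 0)" for t
    have ye: "y t = x0 + integral {0..t} (\<lambda>s. F s (z s))" if "t\<in>?S" for t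
      using ze[OF that] that by (simp add: y_def)
    have "ode_sol T (\<lambda>u. (1-\<epsilon>) *\<^sub>R G0 u + \<epsilon> *\<^sub>R G1 u) x0 y"
      unfolding ode_sol_def
    proof (intro conjI ballI allI impI)
      show "y 0 = x0" using ye[of 0] T by simp
      fix t assume t: "t \<in> ?S"
      have "(y has_vector_derivative F t (z t)) (at t within ?S)"
        by (rule int_eq_deriv[OF Fzc ye t])
      moreover have "F t (z t) = (1-\<epsilon>) *\<^sub>R G0 (y t) + \<epsilon> *\<^sub>R G1 (y t)"
        using \<pi>s[OF zK[OF t]] t by (simp add: F_def y_def)
      ultimately show "(y has_vector_derivative (1-\<epsilon>) *\<^sub>R G0 (y t) + \<epsilon> *\<^sub>R G1 (y t)) (at t within ?S)" by simp
    next
      fix t assume "t \<notin> ?S" thus "y t = 0" unfolding y_def by (rule if_not_P)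
    qed
    moreover have "\<forall>t\<in>?S. norm (y t - x t) \<le> C * \<epsilon>" using bnd2 by (simp add: y_def)
    ultimately show ?thesis by blast
  qed
  moreover have "e0 > 0" using Cpos by (simp add: e0_def)
  ultimately show ?thesis using Cpos by blast
qed

lemma adj_comp:
  fixes h :: "real^'n \<Rightarrow> 'b::euclidean_space"
  assumes "linear h"
  shows "adjoint h y = (\<chi> j. h (axis j 1) \<bullet> y)"
proof -
  have "adjoint h y $ j = h (axis j 1) \<bullet> y" for j
    using adjoint_works[OF assms, of "axis j 1" y] by (simp add: inner_axis')
  thus ?thesis by (simp add: vec_eq_iff)
qed

lemma lin_blin: "linear (blinfun_apply B)"
  by (simp add: blinfun.bounded_linear_right bounded_linear.linear)

lemma adj_bound:
  fixes B :: "(real^'n) \<Rightarrow>\<^sub>L 'b::euclidean_space"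
  shows "norm (adjoint (blinfun_apply B) w) \<le> real CARD('n) * norm B * norm w"
proof -
  have "norm (adjoint (blinfun_apply B) w) \<le> (\<Sum>j\<in>UNIV. \<bar>adjoint (blinfun_apply B) w $ j\<bar>)"
    by (rule norm_le_l1_cart)
  also have "\<dots> \<le> of_nat (card (UNIV::'n set)) * (norm B * norm w)"
  proof (rule sum_bounded_above)
    fix j :: 'n
    have "\<bar>adjoint (blinfun_apply B) w $ j\<bar> = \<bar>blinfun_apply B (axis j 1) \<bullet> w\<bar>"
      using adj_comp[OF lin_blin, of B w] by simp
    also have "\<dots> \<le> norm (blinfun_apply B (axis j 1)) * norm w" by (rule Cauchy_Schwarz_ineq2)
    also have "\<dots> \<le> norm B * norm w" using norm_blinfun[of B "axis j 1"] by (simp add: mult_right_mono)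
    finally show "\<bar>adjoint (blinfun_apply B) w $ j\<bar> \<le> norm B * norm w" .
  qed
  finally show ?thesis by (simp add: mult.assoc)
qed

lemma refl_img: "(\<lambda>t. T - t) ` {0..T} = {0..(T::real)}"
proof
  show "(\<lambda>t. T - t) ` {0..T} \<subseteq> {0..T}" by auto
  show "{0..T} \<subseteq> (\<lambda>t. T - t) ` {0..T}"
  proof
    fix u assume "u \<in> {0..T}" thus "u \<in> (\<lambda>t. T - t) ` {0..T}" by (intro image_eqI[of u _ "T - u"]) auto
  qed
qed

lemma refl_deriv:
  fixes g :: "real \<Rightarrow> 'v::real_normed_vector"
  assumes t: "t \<in> {0..T}" and d: "(g has_vector_derivative g') (at (T - t) within {0..T})"
  shows "((\<lambda>t. g (T - t)) has_vector_derivative (- g')) (at t within {0..T})"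
proof -
  have "((\<lambda>t. T - t) has_vector_derivative (0 - 1)) (at t within {0..T})"
    by (intro has_vector_derivative_diff has_vector_derivative_const has_vector_derivative_id)
  from vector_diff_chain_within[OF this, of g g'] d show ?thesis by (simp add: refl_img o_def)
qed

lemma costate_ok:
  fixes f :: "real^'n \<Rightarrow> real^'m \<Rightarrow> real^'n" and r :: "real^'n \<Rightarrow> real^'m \<Rightarrow> real"
  assumes T: "0 \<le> T" and sx: "ode_sol T (\<lambda>x. f x ab) x0 (xsol T f x0 ab)"
    and Cf: "C1_fun (\<lambda>x. f x ab)" and Cr: "C1_fun (\<lambda>x. r x ab)"
  shows "costate_sol T f r q x0 ab (costate T f r q x0 ab)"
proof -
  let ?S = "{0..T}"
  define x where "x = xsol T f x0 ab"
  note fx = ode_sol_facts[OF sx[folded x_def]]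
  obtain Df where Df: "\<And>p. ((\<lambda>y. f y ab) has_derivative blinfun_apply (Df p)) (at p)" and Dfc: "continuous_on UNIV Df"
    using Cf unfolding C1_fun_def by blast
  obtain Dr where Dr: "\<And>p. ((\<lambda>y. r y ab) has_derivative blinfun_apply (Dr p)) (at p)" and Drc: "continuous_on UNIV Dr"
    using Cr unfolding C1_fun_def by blast
  have fdf: "frechet_derivative (\<lambda>y. f y ab) (at p) = blinfun_apply (Df p)" for p
    using frechet_derivative_at[OF Df] by simp
  have fdr: "frechet_derivative (\<lambda>y. r y ab) (at p) = blinfun_apply (Dr p)" for p
    using frechet_derivative_at[OF Dr] by simp
  define gq where "gq = adjoint (frechet_derivative q (at (x T))) 1"
  define G where "G s u = adjoint (blinfun_apply (Df (x (T - s)))) u + adjoint (blinfun_apply (Dr (x (T - s)))) 1"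
    for s u
  have xr: "continuous_on ?S (\<lambda>s. x (T - s))"
    by (rule continuous_on_compose2[OF fx(4)]) (auto intro!: continuous_intros)
  have Dfx: "continuous_on ?S (\<lambda>s. Df (x (T - s)))"
    by (rule continuous_on_compose2[OF Dfc xr]) auto
  have Drx: "continuous_on ?S (\<lambda>s. Dr (x (T - s)))"
    by (rule continuous_on_compose2[OF Drc xr]) auto
  have Gc: "continuous_on ?S (\<lambda>s. G s u)" for u
    unfolding G_def adj_comp[OF lin_blin]
    by (intro continuous_intros Dfx Drx)
  have "compact ((\<lambda>s. Df (x (T - s))) ` ?S)" by (rule compact_continuous_image[OF Dfx compact_Icc])
  then obtain Bd where Bd0: "Bd > 0" "\<forall>w\<in>(\<lambda>s. Df (x (T - s))) ` ?S. norm w \<le> Bd"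
    using compact_imp_bounded bounded_pos by blast
  hence Bd: "\<And>s. s \<in> ?S \<Longrightarrow> norm (Df (x (T - s))) \<le> Bd" by auto
  define L where "L = real CARD('n) * Bd + 1"
  have L: "L > 0" unfolding L_def using Bd0 by (simp add: add_pos_nonneg)
  have Gl: "norm (G s u - G s v) \<le> L * norm (u - v)" if s: "s \<in> ?S" for s u v
  proof -
    have "G s u - G s v = adjoint (blinfun_apply (Df (x (T - s)))) (u - v)"
      unfolding G_def by (simp add: linear_diff[OF adjoint_linear[OF lin_blin]])
    also have "norm \<dots> \<le> real CARD('n) * norm (Df (x (T - s))) * norm (u - v)" by (rule adj_bound)
    also have "\<dots> \<le> L * norm (u - v)"
    proof (rule mult_right_mono)
      have "real CARD('n) * norm (Df (x (T - s))) \<le> real CARD('n) * Bd"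
        using Bd[OF s] by (intro mult_left_mono) auto
      thus "real CARD('n) * norm (Df (x (T - s))) \<le> L" unfolding L_def by linarith
    qed simp
    finally show ?thesis .
  qed
  obtain \<mu> where \<mu>c: "continuous_on ?S \<mu>" and \<mu>e: "\<And>t. t\<in>?S \<Longrightarrow> \<mu> t = gq + integral {0..t} (\<lambda>s. G s (\<mu> s))"
    using picard_exist[OF T Gc L Gl, of gq] by blast
  have G\<mu>c: "continuous_on ?S (\<lambda>s. G s (\<mu> s))" by (rule comp_cont[OF Gc Gl \<mu>c])
  define lam where "lam t = (if t \<in> ?S then \<mu> (T - t) else 0)" for t
  have lamd: "(lam has_vector_derivative - G (T - t) (lam t)) (at t within ?S)" if t: "t \<in> ?S" for t
  proof -
    have "T - t \<in> ?S" using t by auto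
    from refl_deriv[OF t int_eq_deriv[OF G\<mu>c \<mu>e this]]
    have "((\<lambda>t. \<mu> (T - t)) has_vector_derivative - G (T - t) (\<mu> (T - t))) (at t within ?S)" .
    moreover have "lam t = \<mu> (T - t)" using t by (simp add: lam_def)
    ultimately show ?thesis
      by (intro has_vector_derivative_transform[OF t, of lam "\<lambda>t. \<mu> (T - t)"]) (auto simp: lam_def)
  qed
  have sol: "costate_sol T f r q x0 ab lam"
    unfolding costate_sol_def
  proof (intro conjI ballI allI impI)
    show "lam T = adjoint (frechet_derivative q (at (xsol T f x0 ab T))) 1"
      using \<mu>e[of 0] T by (simp add: lam_def gq_def x_def)
    fix t assume t: "t \<in> ?S"
    show "(lam has_vector_derivative
        - (adjoint (frechet_derivative (\<lambda>y. f y ab) (at (xsol T f x0 ab t))) (lam t)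
           + adjoint (frechet_derivative (\<lambda>y. r y ab) (at (xsol T f x0 ab t))) 1))
        (at t within ?S)"
      using lamd[OF t] by (simp add: fdf fdr G_def x_def)
  next
    fix t assume "t \<notin> ?S" thus "lam t = 0" unfolding lam_def by (rule if_not_P)
  qed
  have uniq: "lam' = lam" if s': "costate_sol T f r q x0 ab lam'" for lam'
  proof
    fix t
    define \<mu>' where "\<mu>' = (\<lambda>s. lam' (T - s))"
    have d': "(\<mu>' has_vector_derivative G s (\<mu>' s)) (at s within ?S)" if s: "s \<in> ?S" for s
    proof -
      have "T - s \<in> ?S" using s by auto
      with s' have "(lam' has_vector_derivative - G s (lam' (T - s))) (at (T - s) within ?S)"
        unfolding costate_sol_def by (simp add: fdf fdr G_def x_def)
      from refl_deriv[OF s this] show ?thesis by (simp add: \<mu>'_def)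
    qed
    have \<mu>'0: "\<mu>' 0 = gq" using s' unfolding costate_sol_def by (simp add: \<mu>'_def gq_def x_def)
    have \<mu>'c: "continuous_on ?S \<mu>'" by (rule deriv_cont[OF d'])
    have h': "((\<lambda>s. G s (\<mu>' s)) has_integral (\<mu>' u - gq)) {0..u}" if "u \<in> ?S" for u
      using deriv_int_eq[where h="\<lambda>s. G s (\<mu>' s)", OF d' that] \<mu>'0 by simp
    have h: "((\<lambda>s. G s (\<mu> s)) has_integral (\<mu> u - gq)) {0..u}" if u: "u \<in> ?S" for u
    proof -
      have "(\<lambda>s. G s (\<mu> s)) integrable_on {0..u}"
        using u by (intro integrable_continuous_real continuous_on_subset[OF G\<mu>c]) auto
      thus ?thesis using \<mu>e[OF u] by (simp add: has_integral_integral)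
    qed
    have eq: "\<mu>' u = \<mu> u" if u: "u \<in> ?S" for u
    proof -
      have "norm (\<mu>' u - \<mu> u) \<le> 0 * T * exp (L * u)"
      proof (rule diff_bound[OF T \<mu>'c \<mu>c h' h L order_refl _ u])
        fix s assume "s \<in> ?S"
        from Gl[OF this, of "\<mu>' s" "\<mu> s"]
        show "norm (G s (\<mu>' s) - G s (\<mu> s)) \<le> 0 + L * norm (\<mu>' s - \<mu> s)" by simp
      qed
      thus ?thesis by simp
    qed
    show "lam' t = lam t"
    proof (cases "t \<in> ?S")
      case True
      hence "T - t \<in> ?S" by auto
      from eq[OF this] True show ?thesis by (simp add: \<mu>'_def lam_def)
    next
      case False
      have "lam t = 0" unfolding lam_def using False by (rule if_not_P)
      moreover have "lam' t = 0" using s' False unfolding costate_sol_def by blast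
      ultimately show ?thesis by simp
    qed
  qed
  have "costate T f r q x0 ab = lam"
    unfolding costate_def using sol uniq by (rule the_equality)
  with sol show ?thesis by simp
qed

lemma has_vector_derivative_inner_lem:
  fixes f g :: "real \<Rightarrow> 'v::real_inner"
  assumes "(f has_vector_derivative f') (at t within S)" "(g has_vector_derivative g') (at t within S)"
  shows "((\<lambda>t. f t \<bullet> g t) has_vector_derivative (f t \<bullet> g' + f' \<bullet> g t)) (at t within S)"
proof -
  have "((\<lambda>t. f t \<bullet> g t) has_derivative (\<lambda>h. f t \<bullet> (h *\<^sub>R g') + (h *\<^sub>R f') \<bullet> g t)) (at t within S)"
    using has_derivative_inner[OF assms[unfolded has_vector_derivative_def]] .
  thus ?thesis unfolding has_vector_derivative_def
    by (rule has_derivative_eq_rhs) (simp add: fun_eq_iff algebra_simps)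
qed

lemma contc: "continuous_on UNIV g \<Longrightarrow> continuous_on S z \<Longrightarrow> continuous_on S (\<lambda>t. g (z t))"
  by (rule continuous_on_compose2) auto

lemma adj_identity:
  fixes f :: "real^'n \<Rightarrow> real^'m \<Rightarrow> real^'n" and r :: "real^'n \<Rightarrow> real^'m \<Rightarrow> real"
    and q :: "real^'n \<Rightarrow> real"
  assumes T: "0 \<le> T"
    and sx: "ode_sol T (\<lambda>u. f u ab) x0 x"
    and sy: "ode_sol T (\<lambda>u. (1-\<epsilon>) *\<^sub>R f u ab + \<epsilon> *\<^sub>R f u a) x0 y"
    and lT: "lam T = adjoint (blinfun_apply (Dq (x T))) 1"
    and ld: "\<And>t. t\<in>{0..T} \<Longrightarrow> (lam has_vector_derivative
        - (adjoint (blinfun_apply (Df (x t))) (lam t) + adjoint (blinfun_apply (Dr (x t))) 1)) (at t within {0..T})"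
    and Dfc: "continuous_on UNIV Df" and Drc: "continuous_on UNIV Dr"
    and f0c: "continuous_on UNIV (\<lambda>u. f u ab)" and f1c: "continuous_on UNIV (\<lambda>u. f u a)"
    and r0c: "continuous_on UNIV (\<lambda>u. r u ab)" and r1c: "continuous_on UNIV (\<lambda>u. r u a)"
  shows "Jeps T r q ab a \<epsilon> y - Jc T r q x ab
      - \<epsilon> * integral {0..T} (\<lambda>t. (f (y t) a - f (y t) ab) \<bullet> lam t + r (y t) a - r (y t) ab)
    = integral {0..T} (\<lambda>t. (r (y t) ab - r (x t) ab - blinfun_apply (Dr (x t)) (y t - x t))
          + lam t \<bullet> (f (y t) ab - f (x t) ab - blinfun_apply (Df (x t)) (y t - x t)))
      + (q (y T) - q (x T) - blinfun_apply (Dq (x T)) (y T - x T))"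
proof -
  let ?S = "{0..T}"
  note fx = ode_sol_facts[OF sx] and fy = ode_sol_facts[OF sy]
  have lc: "continuous_on ?S lam" by (rule deriv_cont[OF ld])
  have xc: "continuous_on ?S x" and yc: "continuous_on ?S y" using fx(4) fy(4) .
  define a1 where "a1 t = r (y t) ab" for t
  define a2 where "a2 t = r (x t) ab" for t
  define a3 where "a3 t = r (y t) a" for t
  define a4 where "a4 t = blinfun_apply (Dr (x t)) (y t - x t)" for t
  define a5 where "a5 t = lam t \<bullet> (f (y t) ab - f (x t) ab - blinfun_apply (Df (x t)) (y t - x t))" for t
  define a6 where "a6 t = (f (y t) a - f (y t) ab) \<bullet> lam t" for t
  have c1: "continuous_on ?S a1" unfolding a1_def by (rule contc[OF r0c yc])
  have c2: "continuous_on ?S a2" unfolding a2_def by (rule contc[OF r0c xc])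
  have c3: "continuous_on ?S a3" unfolding a3_def by (rule contc[OF r1c yc])
  have c4: "continuous_on ?S a4" unfolding a4_def
    by (intro continuous_intros contc[OF Drc xc] xc yc)
  have c5: "continuous_on ?S a5" unfolding a5_def
    by (intro continuous_intros contc[OF Dfc xc] contc[OF f0c xc] contc[OF f0c yc] lc xc yc)
  have c6: "continuous_on ?S a6" unfolding a6_def
    by (intro continuous_intros contc[OF f1c yc] contc[OF f0c yc] lc)
  have i1: "a1 integrable_on ?S" and i2: "a2 integrable_on ?S" and i3: "a3 integrable_on ?S"
    and i4: "a4 integrable_on ?S" and i5: "a5 integrable_on ?S" and i6: "a6 integrable_on ?S"
    using c1 c2 c3 c4 c5 c6 by (auto intro: integrable_continuous_real)
  define p' where "p' t = a5 t - a4 t + \<epsilon> * a6 t" for t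
  have pd: "((\<lambda>t. lam t \<bullet> (y t - x t)) has_vector_derivative p' t) (at t within ?S)" if t: "t \<in> ?S" for t
  proof -
    have dd: "((\<lambda>t. y t - x t) has_vector_derivative
        ((1-\<epsilon>) *\<^sub>R f (y t) ab + \<epsilon> *\<^sub>R f (y t) a - f (x t) ab)) (at t within ?S)"
      by (rule has_vector_derivative_diff[OF fy(2)[OF t] fx(2)[OF t]])
    have e: "lam t \<bullet> ((1-\<epsilon>) *\<^sub>R f (y t) ab + \<epsilon> *\<^sub>R f (y t) a - f (x t) ab)
        + (- (adjoint (blinfun_apply (Df (x t))) (lam t) + adjoint (blinfun_apply (Dr (x t))) 1)) \<bullet> (y t - x t)
        = p' t"
    proof -
      have w1: "(y t - x t) \<bullet> adjoint (blinfun_apply (Df (x t))) (lam t) = blinfun_apply (Df (x t)) (y t - x t) \<bullet> lam t"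
        by (rule adjoint_works[OF lin_blin])
      have w2: "(y t - x t) \<bullet> adjoint (blinfun_apply (Dr (x t))) 1 = blinfun_apply (Dr (x t)) (y t - x t) \<bullet> 1"
        by (rule adjoint_works[OF lin_blin])
      have "(- (adjoint (blinfun_apply (Df (x t))) (lam t) + adjoint (blinfun_apply (Dr (x t))) 1)) \<bullet> (y t - x t)
          = - ((y t - x t) \<bullet> adjoint (blinfun_apply (Df (x t))) (lam t)) - (y t - x t) \<bullet> adjoint (blinfun_apply (Dr (x t))) 1"
        by (subst inner_commute) (simp add: inner_add_right inner_diff_right)
      also have "\<dots> = - (lam t \<bullet> blinfun_apply (Df (x t)) (y t - x t)) - a4 t"
        unfolding w1 w2 a4_def by (simp add: inner_commute)
      finally have 1: "(- (adjoint (blinfun_apply (Df (x t))) (lam t) + adjoint (blinfun_apply (Dr (x t))) 1)) \<bullet> (y t - x t)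
          = - (lam t \<bullet> blinfun_apply (Df (x t)) (y t - x t)) - a4 t" .
      have 2: "(1-\<epsilon>) *\<^sub>R f (y t) ab + \<epsilon> *\<^sub>R f (y t) a - f (x t) ab
          = (f (y t) ab - f (x t) ab) + \<epsilon> *\<^sub>R (f (y t) a - f (y t) ab)"
        by (simp add: algebra_simps)
      show ?thesis unfolding 1 2 p'_def a5_def a6_def
        by (simp add: inner_add_right inner_diff_right inner_commute algebra_simps)
    qed
    from has_vector_derivative_inner_lem[OF ld[OF t] dd] e show ?thesis by simp
  qed
  have ftc: "(p' has_integral (lam T \<bullet> (y T - x T) - lam 0 \<bullet> (y 0 - x 0))) ?S"
    by (rule fundamental_theorem_of_calculus[OF T pd])
  have "lam T \<bullet> (y T - x T) = blinfun_apply (Dq (x T)) (y T - x T)"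
    unfolding lT using adjoint_works[OF lin_blin, of "y T - x T" "Dq (x T)" 1]
    by (simp add: inner_commute)
  with ftc fx(1) fy(1) have ftc2: "integral ?S p' = blinfun_apply (Dq (x T)) (y T - x T)"
    by (simp add: integral_unique)
  have ip: "integral ?S p' = integral ?S a5 - integral ?S a4 + \<epsilon> * integral ?S a6"
  proof -
    have ia: "(\<lambda>t. a5 t - a4 t) integrable_on ?S" by (intro integrable_diff i5 i4)
    have ib: "(\<lambda>t. \<epsilon> * a6 t) integrable_on ?S" using integrable_on_cmult_left[OF i6, of \<epsilon>] by simp
    show ?thesis unfolding p'_def integral_add[OF ia ib] integral_diff[OF i5 i4] by simp
  qed
  have iL: "integral ?S (\<lambda>t. (f (y t) a - f (y t) ab) \<bullet> lam t + r (y t) a - r (y t) ab)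
      = integral ?S a6 + integral ?S a3 - integral ?S a1"
  proof -
    have "integral ?S (\<lambda>t. a6 t + a3 t - a1 t) = integral ?S a6 + integral ?S a3 - integral ?S a1"
      using i1 i3 i6 by (simp add: integral_add integral_diff integrable_add)
    thus ?thesis by (simp add: a1_def a3_def a6_def)
  qed
  have iR: "integral ?S (\<lambda>t. (r (y t) ab - r (x t) ab - blinfun_apply (Dr (x t)) (y t - x t))
          + lam t \<bullet> (f (y t) ab - f (x t) ab - blinfun_apply (Df (x t)) (y t - x t)))
      = integral ?S a1 - integral ?S a2 - integral ?S a4 + integral ?S a5"
  proof -
    have "integral ?S (\<lambda>t. a1 t - a2 t - a4 t + a5 t) = integral ?S a1 - integral ?S a2 - integral ?S a4 + integral ?S a5"
      using i1 i2 i4 i5 by (simp add: integral_add integral_diff integrable_add integrable_diff)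
    thus ?thesis by (simp add: a1_def a2_def a4_def a5_def)
  qed
  have J1: "Jeps T r q ab a \<epsilon> y = (1-\<epsilon>) * (integral ?S a1 + q (y T)) + \<epsilon> * (integral ?S a3 + q (y T))"
    unfolding Jeps_def Jc_def a1_def a3_def by simp
  have J2: "Jc T r q x ab = integral ?S a2 + q (x T)"
    unfolding Jc_def a2_def by simp
  show ?thesis unfolding iL iR J1 J2 using ftc2 ip by (simp add: algebra_simps)
qed

lemma main_lim:
  fixes f :: "real^'n \<Rightarrow> real^'m \<Rightarrow> real^'n" and r :: "real^'n \<Rightarrow> real^'m \<Rightarrow> real"
    and q :: "real^'n \<Rightarrow> real"
  assumes T: "0 < T" and sx: "ode_sol T (\<lambda>u. f u ab) x0 (xsol T f x0 ab)"
    and Cf0: "C1_fun (\<lambda>u. f u ab)" and Cf1: "C1_fun (\<lambda>u. f u a)"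
    and Cr0: "C1_fun (\<lambda>u. r u ab)" and Cr1: "C1_fun (\<lambda>u. r u a)" and Cq: "C1_fun q"
  shows "((\<lambda>\<epsilon>. (Jeps T r q ab a \<epsilon> (xeps T f x0 ab a \<epsilon>) - Jc T r q (xsol T f x0 ab) ab) / \<epsilon>)
     \<longlongrightarrow> integral {0..T} (\<lambda>t. (f (xsol T f x0 ab t) a - f (xsol T f x0 ab t) ab) \<bullet> costate T f r q x0 ab t
            + r (xsol T f x0 ab t) a - r (xsol T f x0 ab t) ab)) (at_right 0)"
proof -
  let ?S = "{0..T}"
  define x where "x = xsol T f x0 ab"
  define lam where "lam = costate T f r q x0 ab"
  have T0: "0 \<le> T" using T by simp
  note fx = ode_sol_facts[OF sx[folded x_def]]
  have cs: "costate_sol T f r q x0 ab lam"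
    unfolding lam_def by (rule costate_ok[where f=f and ab=ab and r=r, OF T0 sx Cf0 Cr0])
  obtain Df where Df: "\<And>p. ((\<lambda>y. f y ab) has_derivative blinfun_apply (Df p)) (at p)" and Dfc: "continuous_on UNIV Df"
    using Cf0 unfolding C1_fun_def by blast
  obtain Dr where Dr: "\<And>p. ((\<lambda>y. r y ab) has_derivative blinfun_apply (Dr p)) (at p)" and Drc: "continuous_on UNIV Dr"
    using Cr0 unfolding C1_fun_def by blast
  obtain Dq where Dq: "\<And>p. (q has_derivative blinfun_apply (Dq p)) (at p)" and Dqc: "continuous_on UNIV Dq"
    using Cq unfolding C1_fun_def by blast
  have fdf: "frechet_derivative (\<lambda>y. f y ab) (at p) = blinfun_apply (Df p)" for p
    using frechet_derivative_at[OF Df] by simp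
  have fdr: "frechet_derivative (\<lambda>y. r y ab) (at p) = blinfun_apply (Dr p)" for p
    using frechet_derivative_at[OF Dr] by simp
  have fdq: "frechet_derivative q (at p) = blinfun_apply (Dq p)" for p
    using frechet_derivative_at[OF Dq] by simp
  have lT: "lam T = adjoint (blinfun_apply (Dq (x T))) 1"
    using cs unfolding costate_sol_def x_def fdq by simp
  have ld: "\<And>t. t\<in>?S \<Longrightarrow> (lam has_vector_derivative
        - (adjoint (blinfun_apply (Df (x t))) (lam t) + adjoint (blinfun_apply (Dr (x t))) 1)) (at t within ?S)"
    using cs unfolding costate_sol_def x_def fdf fdr by simp
  have lc: "continuous_on ?S lam" by (rule deriv_cont[OF ld])
  obtain R0 where R0: "R0 > 0" "\<And>t. t\<in>?S \<Longrightarrow> norm (x t) \<le> R0" using cont_bound[OF fx(4)] by blast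
  obtain \<Lambda> where \<Lambda>: "\<Lambda> > 0" "\<And>t. t\<in>?S \<Longrightarrow> norm (lam t) \<le> \<Lambda>" using cont_bound[OF lc] by blast
  have f0c: "continuous_on UNIV (\<lambda>u. f u ab)" by (rule C1_cont[OF Cf0])
  have f1c: "continuous_on UNIV (\<lambda>u. f u a)" by (rule C1_cont[OF Cf1])
  have r0c: "continuous_on UNIV (\<lambda>u. r u ab)" by (rule C1_cont[OF Cr0])
  have r1c: "continuous_on UNIV (\<lambda>u. r u a)" by (rule C1_cont[OF Cr1])
  obtain C e0 where C: "C > 0" and e0: "e0 > 0" and Y: "\<And>\<epsilon>. 0 < \<epsilon> \<Longrightarrow> \<epsilon> < e0 \<Longrightarrow>
     (\<exists>y. ode_sol T (\<lambda>u. (1-\<epsilon>) *\<^sub>R f u ab + \<epsilon> *\<^sub>R f u a) x0 y \<and>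
          (\<forall>t\<in>?S. norm (y t - x t) \<le> C * \<epsilon>))"
    using perturb_exist[OF T0 sx[folded x_def] Cf0 Cf1] by blast
  define e1 where "e1 = min e0 (min 1 (1/C))"
  have e1: "e1 > 0" using e0 C by (simp add: e1_def)
  define y where "y \<epsilon> = xeps T f x0 ab a \<epsilon>" for \<epsilon>
  have Yok: "ode_sol T (\<lambda>u. (1-\<epsilon>) *\<^sub>R f u ab + \<epsilon> *\<^sub>R f u a) x0 (y \<epsilon>) \<and> (\<forall>t\<in>?S. norm (y \<epsilon> t - x t) \<le> C * \<epsilon>)"
    if e: "0 < \<epsilon>" "\<epsilon> < e1" for \<epsilon>
  proof -
    have "\<epsilon> < e0" "\<epsilon> \<le> 1" using e by (auto simp: e1_def)
    then obtain z where z: "ode_sol T (\<lambda>u. (1-\<epsilon>) *\<^sub>R f u ab + \<epsilon> *\<^sub>R f u a) x0 z" "\<forall>t\<in>?S. norm (z t - x t) \<le> C * \<epsilon>"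
      using Y e by blast
    have "y \<epsilon> = z"
      unfolding y_def xeps_def traj_def
    proof (rule the_equality[where P="\<lambda>w. ode_sol T (\<lambda>u. (1-\<epsilon>) *\<^sub>R f u ab + \<epsilon> *\<^sub>R f u a) x0 w", OF z(1)])
      fix w assume "ode_sol T (\<lambda>u. (1-\<epsilon>) *\<^sub>R f u ab + \<epsilon> *\<^sub>R f u a) x0 w"
      thus "w = z"
        by (rule ode_unique[OF T0 _ z(1)]) (rule C1_loclip[OF Cf0 Cf1], use e \<open>\<epsilon> \<le> 1\<close> in auto)
    qed
    with z show ?thesis by simp
  qed
  have yK: "norm (y \<epsilon> t - x t) \<le> 1" if e: "0 < \<epsilon>" "\<epsilon> < e1" and t: "t \<in> ?S" for \<epsilon> t
  proof -
    have "C * \<epsilon> \<le> C * (1/C)" using e C by (intro mult_left_mono) (auto simp: e1_def)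
    moreover have "norm (y \<epsilon> t - x t) \<le> C * \<epsilon>" using Yok[OF e] t by blast
    ultimately show ?thesis using C by simp
  qed
  have ynorm: "norm (y \<epsilon> t) \<le> R0 + 1" if e: "0 < \<epsilon>" "\<epsilon> < e1" and t: "t \<in> ?S" for \<epsilon> t
    using norm_triangle_ineq[of "x t" "y \<epsilon> t - x t"] R0(2)[OF t] yK[OF e t] by simp
  have yc: "continuous_on ?S (y \<epsilon>)" if e: "0 < \<epsilon>" "\<epsilon> < e1" for \<epsilon>
    using ode_sol_facts(4)[of T _ x0 "y \<epsilon>"] Yok[OF e] by blast
  define g where "g \<epsilon> t = (f (y \<epsilon> t) a - f (y \<epsilon> t) ab) \<bullet> lam t + r (y \<epsilon> t) a - r (y \<epsilon> t) ab" for \<epsilon> t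
  define g0 where "g0 t = (f (x t) a - f (x t) ab) \<bullet> lam t + r (x t) a - r (x t) ab" for t
  define E where "E \<epsilon> = integral ?S (\<lambda>t. (r (y \<epsilon> t) ab - r (x t) ab - blinfun_apply (Dr (x t)) (y \<epsilon> t - x t))
          + lam t \<bullet> (f (y \<epsilon> t) ab - f (x t) ab - blinfun_apply (Df (x t)) (y \<epsilon> t - x t)))
      + (q (y \<epsilon> T) - q (x T) - blinfun_apply (Dq (x T)) (y \<epsilon> T - x T))" for \<epsilon>
  have split: "(Jeps T r q ab a \<epsilon> (y \<epsilon>) - Jc T r q x ab) / \<epsilon> = E \<epsilon> / \<epsilon> + integral ?S (g \<epsilon>)"
    if e: "0 < \<epsilon>" "\<epsilon> < e1" for \<epsilon>
  proof -
    have "Jeps T r q ab a \<epsilon> (y \<epsilon>) - Jc T r q x ab - \<epsilon> * integral ?S (g \<epsilon>) = E \<epsilon>"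
      unfolding E_def g_def
      by (rule adj_identity[where f=f and r=r and q=q and ab=ab and a=a and x=x and lam=lam and \<epsilon>=\<epsilon> and y="y \<epsilon>" and Dq=Dq and Df=Df and Dr=Dr, OF T0 sx[folded x_def] conjunct1[OF Yok[OF e]] lT ld Dfc Drc f0c f1c r0c r1c])
    thus ?thesis using e by (simp add: field_simps)
  qed
  obtain L0 where L0: "L0>0" "\<forall>u\<in>cball 0 (R0+1). \<forall>v\<in>cball 0 (R0+1). norm (f u ab - f v ab) \<le> L0 * norm (u - v)"
    using C1_lip[OF Cf0] by blast
  obtain L1 where L1: "L1>0" "\<forall>u\<in>cball 0 (R0+1). \<forall>v\<in>cball 0 (R0+1). norm (f u a - f v a) \<le> L1 * norm (u - v)"
    using C1_lip[OF Cf1] by blast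
  obtain M0 where M0: "M0>0" "\<forall>u\<in>cball 0 (R0+1). \<forall>v\<in>cball 0 (R0+1). norm (r u ab - r v ab) \<le> M0 * norm (u - v)"
    using C1_lip[OF Cr0] by blast
  obtain M1 where M1: "M1>0" "\<forall>u\<in>cball 0 (R0+1). \<forall>v\<in>cball 0 (R0+1). norm (r u a - r v a) \<le> M1 * norm (u - v)"
    using C1_lip[OF Cr1] by blast
  define KA where "KA = \<Lambda> * (L1 + L0) + M1 + M0"
  have KA: "KA > 0" unfolding KA_def using \<Lambda> L0 L1 M0 M1 by (simp add: add_pos_pos)
  have gc: "continuous_on ?S (g \<epsilon>)" if e: "0 < \<epsilon>" "\<epsilon> < e1" for \<epsilon>
    unfolding g_def by (intro continuous_intros contc[OF f1c yc[OF e]] contc[OF f0c yc[OF e]]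
        contc[OF r1c yc[OF e]] contc[OF r0c yc[OF e]] lc)
  have g0c: "continuous_on ?S g0"
    unfolding g0_def by (intro continuous_intros contc[OF f1c fx(4)] contc[OF f0c fx(4)]
        contc[OF r1c fx(4)] contc[OF r0c fx(4)] lc)
  have A: "((\<lambda>\<epsilon>. integral ?S (g \<epsilon>)) \<longlongrightarrow> integral ?S g0) (at_right 0)"
  proof -
    have bnd: "norm (integral ?S (g \<epsilon>) - integral ?S g0) \<le> T * (KA * C) * \<epsilon>" if e: "0 < \<epsilon>" "\<epsilon> < e1" for \<epsilon>
    proof -
      have ie: "integral ?S (g \<epsilon>) - integral ?S g0 = integral ?S (\<lambda>t. g \<epsilon> t - g0 t)"
        using gc[OF e] g0c by (simp add: integral_diff integrable_continuous_real)
      have "norm (integral ?S (\<lambda>t. g \<epsilon> t - g0 t)) \<le> integral ?S (\<lambda>t. (KA * C) * \<epsilon>)"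
      proof (rule integral_norm_bound_integral)
        show "(\<lambda>t. g \<epsilon> t - g0 t) integrable_on ?S"
          using gc[OF e] g0c by (intro integrable_continuous_real continuous_intros)
        fix t assume t: "t \<in> ?S"
        have yb: "y \<epsilon> t \<in> cball 0 (R0+1)" "x t \<in> cball 0 (R0+1)" using ynorm[OF e t] R0(2)[OF t] by auto
        define d where "d = norm (y \<epsilon> t - x t)"
        have "g \<epsilon> t - g0 t = ((f (y \<epsilon> t) a - f (x t) a) - (f (y \<epsilon> t) ab - f (x t) ab)) \<bullet> lam t
            + (r (y \<epsilon> t) a - r (x t) a) - (r (y \<epsilon> t) ab - r (x t) ab)"
          unfolding g_def g0_def by (simp add: inner_diff_left algebra_simps)
        also have "norm \<dots> \<le> norm (((f (y \<epsilon> t) a - f (x t) a) - (f (y \<epsilon> t) ab - f (x t) ab)) \<bullet> lam t)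
            + norm (r (y \<epsilon> t) a - r (x t) a) + norm (r (y \<epsilon> t) ab - r (x t) ab)"
          by (rule order_trans[OF norm_triangle_ineq4 add_right_mono[OF norm_triangle_ineq]])
        also have "\<dots> \<le> ((L1 * d + L0 * d) * \<Lambda>) + M1 * d + M0 * d"
        proof (intro add_mono)
          have "norm (((f (y \<epsilon> t) a - f (x t) a) - (f (y \<epsilon> t) ab - f (x t) ab)) \<bullet> lam t)
              \<le> norm ((f (y \<epsilon> t) a - f (x t) a) - (f (y \<epsilon> t) ab - f (x t) ab)) * norm (lam t)"
            by (simp add: Cauchy_Schwarz_ineq2)
          also have "\<dots> \<le> (L1 * d + L0 * d) * \<Lambda>"
          proof (rule mult_mono)
            show "norm ((f (y \<epsilon> t) a - f (x t) a) - (f (y \<epsilon> t) ab - f (x t) ab)) \<le> L1 * d + L0 * d"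
              using norm_triangle_ineq4[of "f (y \<epsilon> t) a - f (x t) a" "f (y \<epsilon> t) ab - f (x t) ab"]
                L1(2) L0(2) yb unfolding d_def by fastforce
          qed (use \<Lambda>(2)[OF t] L0 L1 d_def in auto)
          finally show "norm (((f (y \<epsilon> t) a - f (x t) a) - (f (y \<epsilon> t) ab - f (x t) ab)) \<bullet> lam t)
              \<le> (L1 * d + L0 * d) * \<Lambda>" .
          show "norm (r (y \<epsilon> t) a - r (x t) a) \<le> M1 * d" using M1(2) yb unfolding d_def by blast
          show "norm (r (y \<epsilon> t) ab - r (x t) ab) \<le> M0 * d" using M0(2) yb unfolding d_def by blast
        qed
        also have "\<dots> = KA * d" unfolding KA_def by (simp add: algebra_simps)
        also have "\<dots> \<le> KA * (C * \<epsilon>)" using KA Yok[OF e] t unfolding d_def by (intro mult_left_mono) auto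
        finally show "norm (g \<epsilon> t - g0 t) \<le> KA * C * \<epsilon>" by (simp add: mult.assoc)
      qed auto
      also have "\<dots> = T * (KA * C) * \<epsilon>" using T by simp
      finally show ?thesis unfolding ie .
    qed
    have "((\<lambda>\<epsilon>. T * (KA * C) * \<epsilon>) \<longlongrightarrow> T * (KA * C) * 0) (at_right 0)"
      by (intro tendsto_intros)
    hence z: "((\<lambda>\<epsilon>. T * (KA * C) * \<epsilon>) \<longlongrightarrow> 0) (at_right 0)" by simp
    have ev: "eventually (\<lambda>\<epsilon>. norm (integral ?S (g \<epsilon>) - integral ?S g0) \<le> T * (KA * C) * \<epsilon>) (at_right 0)"
      unfolding eventually_at_right_field using e1 bnd by blast
    have "((\<lambda>\<epsilon>. integral ?S (g \<epsilon>) - integral ?S g0) \<longlongrightarrow> 0) (at_right 0)"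
      by (rule Lim_null_comparison[OF ev z])
    thus ?thesis by (simp add: LIM_zero_iff)
  qed
  have B: "((\<lambda>\<epsilon>. E \<epsilon> / \<epsilon>) \<longlongrightarrow> 0) (at_right 0)"
  proof (rule tendstoI)
    fix e :: real assume e: "0 < e"
    define KB where "KB = (T * (1 + \<Lambda>) + 1) * C"
    have KB: "KB > 0" unfolding KB_def using T \<Lambda> C by (simp add: add_pos_pos)
    define \<eta> where "\<eta> = e / (2 * KB)"
    have \<eta>: "\<eta> > 0" unfolding \<eta>_def using e KB by simp
    obtain \<rho>1 where \<rho>1: "\<rho>1 > 0" "\<forall>u\<in>cball 0 R0. \<forall>v. norm (v - u) \<le> \<rho>1 \<longrightarrow>
         norm (r v ab - r u ab - blinfun_apply (Dr u) (v - u)) \<le> \<eta> * norm (v - u)"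
      using C1_rem[OF Dr Drc \<eta>, of R0] by blast
    obtain \<rho>2 where \<rho>2: "\<rho>2 > 0" "\<forall>u\<in>cball 0 R0. \<forall>v. norm (v - u) \<le> \<rho>2 \<longrightarrow>
         norm (f v ab - f u ab - blinfun_apply (Df u) (v - u)) \<le> \<eta> * norm (v - u)"
      using C1_rem[OF Df Dfc \<eta>, of R0] by blast
    obtain \<rho>3 where \<rho>3: "\<rho>3 > 0" "\<forall>u\<in>cball 0 R0. \<forall>v. norm (v - u) \<le> \<rho>3 \<longrightarrow>
         norm (q v - q u - blinfun_apply (Dq u) (v - u)) \<le> \<eta> * norm (v - u)"
      using C1_rem[OF Dq Dqc \<eta>, of R0] by blast
    define b where "b = min e1 (min \<rho>1 (min \<rho>2 \<rho>3) / C)"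
    have b: "b > 0" unfolding b_def using e1 \<rho>1 \<rho>2 \<rho>3 C by simp
    have "norm (E \<epsilon> / \<epsilon>) < e" if \<epsilon>: "0 < \<epsilon>" "\<epsilon> < b" for \<epsilon>
    proof -
      have ee: "0 < \<epsilon>" "\<epsilon> < e1" using \<epsilon> by (auto simp: b_def)
      have Ce: "C * \<epsilon> \<le> \<rho>1" "C * \<epsilon> \<le> \<rho>2" "C * \<epsilon> \<le> \<rho>3"
      proof -
        have "C * \<epsilon> \<le> C * (min \<rho>1 (min \<rho>2 \<rho>3) / C)" using \<epsilon> C by (intro mult_left_mono) (auto simp: b_def)
        hence "C * \<epsilon> \<le> min \<rho>1 (min \<rho>2 \<rho>3)" using C by simp
        thus "C * \<epsilon> \<le> \<rho>1" "C * \<epsilon> \<le> \<rho>2" "C * \<epsilon> \<le> \<rho>3" by auto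
      qed
      have dC: "norm (y \<epsilon> t - x t) \<le> C * \<epsilon>" if "t \<in> ?S" for t using Yok[OF ee] that by blast
      have xb: "x t \<in> cball 0 R0" if "t \<in> ?S" for t using R0(2)[OF that] by simp
      have yc': "continuous_on ?S (y \<epsilon>)" by (rule yc[OF ee])
      have "norm (integral ?S (\<lambda>t. (r (y \<epsilon> t) ab - r (x t) ab - blinfun_apply (Dr (x t)) (y \<epsilon> t - x t))
          + lam t \<bullet> (f (y \<epsilon> t) ab - f (x t) ab - blinfun_apply (Df (x t)) (y \<epsilon> t - x t))))
        \<le> integral ?S (\<lambda>t. (1 + \<Lambda>) * (\<eta> * (C * \<epsilon>)))"
      proof (rule integral_norm_bound_integral)
        show "(\<lambda>t. (r (y \<epsilon> t) ab - r (x t) ab - blinfun_apply (Dr (x t)) (y \<epsilon> t - x t))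
          + lam t \<bullet> (f (y \<epsilon> t) ab - f (x t) ab - blinfun_apply (Df (x t)) (y \<epsilon> t - x t))) integrable_on ?S"
          by (intro integrable_continuous_real continuous_intros contc[OF r0c yc'] contc[OF r0c fx(4)]
              contc[OF Drc fx(4)] contc[OF Dfc fx(4)] contc[OF f0c yc'] contc[OF f0c fx(4)] lc yc' fx(4))
        fix t assume t: "t \<in> ?S"
        have h1: "norm (r (y \<epsilon> t) ab - r (x t) ab - blinfun_apply (Dr (x t)) (y \<epsilon> t - x t)) \<le> \<eta> * (C * \<epsilon>)"
        proof -
          have "norm (r (y \<epsilon> t) ab - r (x t) ab - blinfun_apply (Dr (x t)) (y \<epsilon> t - x t)) \<le> \<eta> * norm (y \<epsilon> t - x t)"
            using \<rho>1(2) xb[OF t] dC[OF t] Ce by fastforce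
          also have "\<dots> \<le> \<eta> * (C * \<epsilon>)" using dC[OF t] \<eta> by (intro mult_left_mono) auto
          finally show ?thesis .
        qed
        have h2: "norm (lam t \<bullet> (f (y \<epsilon> t) ab - f (x t) ab - blinfun_apply (Df (x t)) (y \<epsilon> t - x t))) \<le> \<Lambda> * (\<eta> * (C * \<epsilon>))"
        proof -
          have "norm (lam t \<bullet> (f (y \<epsilon> t) ab - f (x t) ab - blinfun_apply (Df (x t)) (y \<epsilon> t - x t)))
              \<le> norm (lam t) * norm (f (y \<epsilon> t) ab - f (x t) ab - blinfun_apply (Df (x t)) (y \<epsilon> t - x t))"
            by (simp add: Cauchy_Schwarz_ineq2)
          also have "\<dots> \<le> \<Lambda> * (\<eta> * (C * \<epsilon>))"
          proof (rule mult_mono)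
            have "norm (f (y \<epsilon> t) ab - f (x t) ab - blinfun_apply (Df (x t)) (y \<epsilon> t - x t)) \<le> \<eta> * norm (y \<epsilon> t - x t)"
              using \<rho>2(2) xb[OF t] dC[OF t] Ce by fastforce
            also have "\<dots> \<le> \<eta> * (C * \<epsilon>)" using dC[OF t] \<eta> by (intro mult_left_mono) auto
            finally show "norm (f (y \<epsilon> t) ab - f (x t) ab - blinfun_apply (Df (x t)) (y \<epsilon> t - x t)) \<le> \<eta> * (C * \<epsilon>)" .
          qed (use \<Lambda>(1) \<Lambda>(2)[OF t] in auto)
          finally show ?thesis .
        qed
        show "norm ((r (y \<epsilon> t) ab - r (x t) ab - blinfun_apply (Dr (x t)) (y \<epsilon> t - x t))
          + lam t \<bullet> (f (y \<epsilon> t) ab - f (x t) ab - blinfun_apply (Df (x t)) (y \<epsilon> t - x t)))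
          \<le> (1 + \<Lambda>) * (\<eta> * (C * \<epsilon>))"
          using norm_triangle_le[OF add_mono[OF h1 h2]] by (simp add: algebra_simps)
      qed auto
      also have "\<dots> = T * ((1 + \<Lambda>) * (\<eta> * (C * \<epsilon>)))" using T by simp
      finally have I1: "norm (integral ?S (\<lambda>t. (r (y \<epsilon> t) ab - r (x t) ab - blinfun_apply (Dr (x t)) (y \<epsilon> t - x t))
          + lam t \<bullet> (f (y \<epsilon> t) ab - f (x t) ab - blinfun_apply (Df (x t)) (y \<epsilon> t - x t))))
          \<le> T * ((1 + \<Lambda>) * (\<eta> * (C * \<epsilon>)))" .
      have TS: "T \<in> ?S" using T by simp
      have I2: "norm (q (y \<epsilon> T) - q (x T) - blinfun_apply (Dq (x T)) (y \<epsilon> T - x T)) \<le> \<eta> * (C * \<epsilon>)"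
      proof -
        have "norm (q (y \<epsilon> T) - q (x T) - blinfun_apply (Dq (x T)) (y \<epsilon> T - x T)) \<le> \<eta> * norm (y \<epsilon> T - x T)"
          using \<rho>3(2) xb[OF TS] dC[OF TS] Ce by fastforce
        also have "\<dots> \<le> \<eta> * (C * \<epsilon>)" using dC[OF TS] \<eta> by (intro mult_left_mono) auto
        finally show ?thesis .
      qed
      have "norm (E \<epsilon>) \<le> T * ((1 + \<Lambda>) * (\<eta> * (C * \<epsilon>))) + \<eta> * (C * \<epsilon>)"
        unfolding E_def by (rule norm_triangle_le[OF add_mono[OF I1 I2]])
      also have "\<dots> = \<eta> * KB * \<epsilon>" unfolding KB_def by (simp add: algebra_simps)
      also have "\<dots> = e / 2 * \<epsilon>" unfolding \<eta>_def using KB by simp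
      finally have "norm (E \<epsilon>) \<le> e / 2 * \<epsilon>" .
      hence "norm (E \<epsilon> / \<epsilon>) \<le> e / 2" using \<epsilon> by (simp add: field_simps)
      thus ?thesis using e by linarith
    qed
    thus "\<forall>\<^sub>F \<epsilon> in at_right 0. dist (E \<epsilon> / \<epsilon>) 0 < e"
      unfolding eventually_at_right_field using b by (auto simp: dist_norm)
  qed
  have "((\<lambda>\<epsilon>. E \<epsilon> / \<epsilon> + integral ?S (g \<epsilon>)) \<longlongrightarrow> 0 + integral ?S g0) (at_right 0)"
    by (rule tendsto_add[OF B A])
  hence lim: "((\<lambda>\<epsilon>. E \<epsilon> / \<epsilon> + integral ?S (g \<epsilon>)) \<longlongrightarrow> integral ?S g0) (at_right 0)" by simp
  have ev: "eventually (\<lambda>\<epsilon>. E \<epsilon> / \<epsilon> + integral ?S (g \<epsilon>) = (Jeps T r q ab a \<epsilon> (y \<epsilon>) - Jc T r q x ab) / \<epsilon>) (at_right 0)"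
    unfolding eventually_at_right_field using e1 split by (metis)
  from Lim_transform_eventually[OF lim ev]
  show ?thesis unfolding y_def x_def lam_def g0_def .
qed

theorem theorem1:
  fixes T :: real and X :: "(real^'n) set" and x0 :: "real^'n"
    and f :: "real^'n \<Rightarrow> real^'m \<Rightarrow> real^'n"
    and r :: "real^'n \<Rightarrow> real^'m \<Rightarrow> real" and q :: "real^'n \<Rightarrow> real"
    and ab :: "real^'m" and i :: 'm
  assumes T_pos: "T > 0"
    and x0_in: "x0 \<in> X"
    and sol_ex: "\<forall>\<beta>. binary \<beta> \<longrightarrow> (\<exists>!z. ode_sol T (\<lambda>x. f x \<beta>) x0 z)"
    and A1: "\<forall>\<alpha>. binary \<alpha> \<longrightarrow> C2_fun (\<lambda>x. f x \<alpha>) \<and> (\<exists>L. L-lipschitz_on X (\<lambda>x. f x \<alpha>))"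
    and A3_r: "\<forall>\<alpha>. binary \<alpha> \<longrightarrow> C1_fun (\<lambda>x. r x \<alpha>)"
    and A3_q: "C1_fun q"
    and ab_bin: "binary ab"
  shows
   "(ab $ i = 0 \<longrightarrow>
      ((\<lambda>\<epsilon>. (Jeps T r q ab (ab + axis i 1) \<epsilon> (xeps T f x0 ab (ab + axis i 1) \<epsilon>)
               - Jc T r q (xsol T f x0 ab) ab) / \<epsilon>)
       \<longlongrightarrow> integral {0..T} (\<lambda>t.
              (f (xsol T f x0 ab t) (ab + axis i 1) - f (xsol T f x0 ab t) ab) \<bullet> costate T f r q x0 ab t
              + r (xsol T f x0 ab t) (ab + axis i 1) - r (xsol T f x0 ab t) ab)) (at_right 0))
    \<and>
    (ab $ i = 1 \<longrightarrow>
      ((\<lambda>\<epsilon>. (Jc T r q (xsol T f x0 ab) ab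
               - Jeps T r q ab (ab - axis i 1) \<epsilon> (xeps T f x0 ab (ab - axis i 1) \<epsilon>)) / \<epsilon>)
       \<longlongrightarrow> integral {0..T} (\<lambda>t.
              (f (xsol T f x0 ab t) ab - f (xsol T f x0 ab t) (ab - axis i 1)) \<bullet> costate T f r q x0 ab t
              + r (xsol T f x0 ab t) ab - r (xsol T f x0 ab t) (ab - axis i 1))) (at_right 0))"
  proof -
  have Cfun: "\<And>\<alpha>. binary \<alpha> \<Longrightarrow> C1_fun (\<lambda>x. f x \<alpha>)" using A1 C2_C1 by blast
  have Cr: "\<And>\<alpha>. binary \<alpha> \<Longrightarrow> C1_fun (\<lambda>x. r x \<alpha>)" using A3_r by blast
  have sx: "ode_sol T (\<lambda>x. f x ab) x0 (xsol T f x0 ab)"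
    unfolding xsol_def traj_def using theI'[OF sol_ex[rule_format, OF ab_bin]] .
  show ?thesis
  proof (intro conjI impI)
    assume h: "ab $ i = 0"
    have bp: "binary (ab + axis i 1)" using ab_bin h unfolding binary_def by (auto simp: axis_def)
    show "((\<lambda>\<epsilon>. (Jeps T r q ab (ab + axis i 1) \<epsilon> (xeps T f x0 ab (ab + axis i 1) \<epsilon>)
               - Jc T r q (xsol T f x0 ab) ab) / \<epsilon>)
       \<longlongrightarrow> integral {0..T} (\<lambda>t.
              (f (xsol T f x0 ab t) (ab + axis i 1) - f (xsol T f x0 ab t) ab) \<bullet> costate T f r q x0 ab t
              + r (xsol T f x0 ab t) (ab + axis i 1) - r (xsol T f x0 ab t) ab)) (at_right 0)"
      by (rule main_lim[OF T_pos sx Cfun[OF ab_bin] Cfun[OF bp] Cr[OF ab_bin] Cr[OF bp] A3_q])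
  next
    assume h: "ab $ i = 1"
    let ?a = "ab - axis i 1"
    have bm: "binary ?a" using ab_bin h unfolding binary_def by (auto simp: axis_def)
    have L: "((\<lambda>\<epsilon>. - ((Jeps T r q ab ?a \<epsilon> (xeps T f x0 ab ?a \<epsilon>) - Jc T r q (xsol T f x0 ab) ab) / \<epsilon>))
       \<longlongrightarrow> - integral {0..T} (\<lambda>t.
              (f (xsol T f x0 ab t) ?a - f (xsol T f x0 ab t) ab) \<bullet> costate T f r q x0 ab t
              + r (xsol T f x0 ab t) ?a - r (xsol T f x0 ab t) ab)) (at_right 0)"
      by (intro tendsto_minus main_lim[OF T_pos sx Cfun[OF ab_bin] Cfun[OF bm] Cr[OF ab_bin] Cr[OF bm] A3_q])
    have e1: "(\<lambda>\<epsilon>. - ((Jeps T r q ab ?a \<epsilon> (xeps T f x0 ab ?a \<epsilon>) - Jc T r q (xsol T f x0 ab) ab) / \<epsilon>))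
        = (\<lambda>\<epsilon>. (Jc T r q (xsol T f x0 ab) ab - Jeps T r q ab ?a \<epsilon> (xeps T f x0 ab ?a \<epsilon>)) / \<epsilon>)"
      by (simp add: fun_eq_iff minus_divide_left)
    have e2: "(\<lambda>t. (f (xsol T f x0 ab t) ab - f (xsol T f x0 ab t) ?a) \<bullet> costate T f r q x0 ab t
              + r (xsol T f x0 ab t) ab - r (xsol T f x0 ab t) ?a)
        = (\<lambda>t. - ((f (xsol T f x0 ab t) ?a - f (xsol T f x0 ab t) ab) \<bullet> costate T f r q x0 ab t
              + r (xsol T f x0 ab t) ?a - r (xsol T f x0 ab t) ab))"
      by (simp add: fun_eq_iff inner_diff_left algebra_simps)
    show "((\<lambda>\<epsilon>. (Jc T r q (xsol T f x0 ab) ab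
               - Jeps T r q ab (ab - axis i 1) \<epsilon> (xeps T f x0 ab (ab - axis i 1) \<epsilon>)) / \<epsilon>)
       \<longlongrightarrow> integral {0..T} (\<lambda>t.
              (f (xsol T f x0 ab t) ab - f (xsol T f x0 ab t) (ab - axis i 1)) \<bullet> costate T f r q x0 ab t
              + r (xsol T f x0 ab t) ab - r (xsol T f x0 ab t) (ab - axis i 1))) (at_right 0)"
      using L unfolding e1 e2 integral_neg .
  qed
qed

end
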